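(* Let $G$ be a 2-connected graph and $G'$ a graph that is not a circuit, and let $f:G\rightarrow G'$ be a circuit surjection. Let $e$ be an edge of $G'$. If $C$ is a circuit of $G$ containing at least one element of $f^{-1}(e)$, then $C$ contains every element of $f^{-1}(e)$.
   Context: Graphs are undirected, without loops or multiple edges, and not necessarily finite. A circuit surjection $f:G\rightarrow G'$ is a map from the edge set $E(G)$ onto the edge set $E(G')$ such that for every circuit (cycle) $C$ of $G$, the edge set $f(C)$ is a circuit of $G'$; it is also required that $G'$ has no isolated vertices. "$G'$ is not a circuit" means $G'$ is not itself a single cycle. *)

theory Defs
  imports Main
begin

definition graph :: "'a set \<Rightarrow> 'a set set \<Rightarrow> bool" where
  "graph V E \<longleftrightarrow> (\<forall>e\<in>E. \<exists>u v. u \<noteq> v \<and> e = {u, v} \<and> u \<in> V \<and> v \<in> V)"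

definition cycle_edges :: "'a list \<Rightarrow> 'a set set" where
  "cycle_edges xs = {{xs ! i, xs ! ((i + 1) mod length xs)} | i. i < length xs}"

definition is_circuit :: "'a set \<Rightarrow> 'a set set \<Rightarrow> 'a set set \<Rightarrow> bool" where
  "is_circuit V E C \<longleftrightarrow> (\<exists>xs. distinct xs \<and> length xs \<ge> 3 \<and> set xs \<subseteq> V
       \<and> cycle_edges xs \<subseteq> E \<and> C = cycle_edges xs)"

definition connected_graph :: "'a set \<Rightarrow> 'a set set \<Rightarrow> bool" where
  "connected_graph V E \<longleftrightarrow> V \<noteq> {} \<and>
     (\<forall>u\<in>V. \<forall>w\<in>V. (\<lambda>x y. x \<in> V \<and> y \<in> V \<and> {x, y} \<in> E)\<^sup>*\<^sup>* u w)"

definition two_connected :: "'a set \<Rightarrow> 'a set set \<Rightarrow> bool" where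
  "two_connected V E \<longleftrightarrow> (infinite V \<or> card V > 2) \<and> connected_graph V E \<and>
     (\<forall>v\<in>V. connected_graph (V - {v}) {e\<in>E. v \<notin> e})"

definition no_isolated_vertices :: "'a set \<Rightarrow> 'a set set \<Rightarrow> bool" where
  "no_isolated_vertices V E \<longleftrightarrow> (\<forall>v\<in>V. \<exists>e\<in>E. v \<in> e)"

definition circuit_surjection ::
  "'a set \<Rightarrow> 'a set set \<Rightarrow> 'b set \<Rightarrow> 'b set set \<Rightarrow> ('a set \<Rightarrow> 'b set) \<Rightarrow> bool" where
  "circuit_surjection V E V' E' f \<longleftrightarrow> f ` E = E' \<and> no_isolated_vertices V' E' \<and>
     (\<forall>C. is_circuit V E C \<longrightarrow> is_circuit V' E' (f ` C))"

end

theory Submission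
  imports Defs
begin

definition adjE :: "'a set set \<Rightarrow> 'a \<Rightarrow> 'a \<Rightarrow> bool" where
  "adjE E a b \<longleftrightarrow> {a, b} \<in> E"

lemma adjE_sym: "adjE E a b = adjE E b a"
  by (simp add: adjE_def insert_commute)

fun pe :: "'a list \<Rightarrow> 'a set set" where
  "pe (a # b # xs) = insert {a, b} (pe (b # xs))"
| "pe _ = {}"

definition path :: "'a set set \<Rightarrow> 'a list \<Rightarrow> bool" where
  "path E p \<longleftrightarrow> p \<noteq> [] \<and> distinct p \<and> successively (adjE E) p"

lemma pe_Cons: "xs \<noteq> [] \<Longrightarrow> pe (x # xs) = insert {x, hd xs} (pe xs)"
  by (cases xs) auto

lemma pe_append: "xs \<noteq> [] \<Longrightarrow> ys \<noteq> [] \<Longrightarrow> pe (xs @ ys) = pe xs \<union> pe ys \<union> {{last xs, hd ys}}"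
proof (induction xs)
  case Nil then show ?case by simp
next
  case (Cons x xs)
  show ?case
  proof (cases "xs = []")
    case True
    then show ?thesis using Cons by (simp add: pe_Cons)
  next
    case False
    then show ?thesis using Cons by (auto simp add: pe_Cons)
  qed
qed

lemma pe_join: "p \<noteq> [] \<Longrightarrow> r \<noteq> [] \<Longrightarrow> last p = hd r \<Longrightarrow> pe (p @ tl r) = pe p \<union> pe r"
proof (cases r)
  case Nil then show ?thesis by simp
next
  case (Cons h t)
  assume a: "p \<noteq> []" "r \<noteq> []" "last p = hd r"
  show ?thesis
  proof (cases "t = []")
    case True then show ?thesis using Cons by simp
  next
    case False then show ?thesis using Cons a by (auto simp add: pe_append pe_Cons)
  qed
qed

lemma pe_rev: "pe (rev xs) = pe xs"
proof (induction xs)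
  case Nil then show ?case by simp
next
  case (Cons x xs)
  show ?case
  proof (cases "xs = []")
    case True then show ?thesis by simp
  next
    case False
    then show ?thesis using Cons by (auto simp add: pe_append pe_Cons last_rev insert_commute)
  qed
qed

lemma pe_sub_E: "successively (adjE E) p \<Longrightarrow> pe p \<subseteq> E"
  by (induction p rule: pe.induct) (auto simp: adjE_def)

lemma pe_vert: "e \<in> pe p \<Longrightarrow> e \<subseteq> set p"
  by (induction p rule: pe.induct) auto

lemma pe_ne: "length p \<ge> 2 \<Longrightarrow> pe p \<noteq> {}"
  by (cases p rule: pe.cases) auto

lemma pe_app1: "pe xs \<subseteq> pe (xs @ ys)"
  by (cases "xs = [] \<or> ys = []") (auto simp: pe_append)

lemma pe_app2: "pe ys \<subseteq> pe (xs @ ys)"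
  by (cases "xs = [] \<or> ys = []") (auto simp: pe_append)

lemma pe_take: "pe (take k xs) \<subseteq> pe xs"
  by (metis append_take_drop_id pe_app1)

lemma pe_drop: "pe (drop k xs) \<subseteq> pe xs"
  by (metis append_take_drop_id pe_app2)

lemma pe_conv_nth: "pe xs = {{xs ! i, xs ! Suc i} | i. Suc i < length xs}"
proof (induction xs rule: pe.induct)
  case (1 a b xs)
  have "{{(a # b # xs) ! i, (a # b # xs) ! Suc i} | i. Suc i < length (a # b # xs)}
     = insert {a, b} {{(b # xs) ! i, (b # xs) ! Suc i} | i. Suc i < length (b # xs)}"
    (is "?L = ?R")
  proof
    show "?L \<subseteq> ?R"
    proof
      fix e assume "e \<in> ?L"
      then obtain i where i: "e = {(a # b # xs) ! i, (a # b # xs) ! Suc i}" "Suc i < length (a # b # xs)" by blast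
      show "e \<in> ?R"
      proof (cases i)
        case 0 then show ?thesis using i by simp
      next
        case (Suc j) then show ?thesis using i by auto
      qed
    qed
  next
    show "?R \<subseteq> ?L"
    proof
      fix e assume "e \<in> ?R"
      then show "e \<in> ?L"
      proof
        assume "e = {a, b}" then show ?thesis by (auto intro!: exI[of _ 0])
      next
        assume "e \<in> {{(b # xs) ! i, (b # xs) ! Suc i} | i. Suc i < length (b # xs)}"
        then obtain i where "e = {(b # xs) ! i, (b # xs) ! Suc i}" "Suc i < length (b # xs)" by blast
        then show ?thesis by (auto intro!: exI[of _ "Suc i"])
      qed
    qed
  qed
  then show ?case using 1 by simp
next
  case "2_1" then show ?case by simp
next
  case ("2_2" v) then show ?case by simp
qed

lemma cycle_edges_conv: "xs \<noteq> [] \<Longrightarrow> cycle_edges xs = pe (xs @ [hd xs])"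
proof -
  assume ne: "xs \<noteq> []"
  let ?n = "length xs"
  have r: "pe (xs @ [hd xs]) = insert {last xs, hd xs} (pe xs)"
    using ne by (simp add: pe_append)
  show ?thesis
  proof
    show "cycle_edges xs \<subseteq> pe (xs @ [hd xs])"
    proof
      fix e assume "e \<in> cycle_edges xs"
      then obtain i where i: "i < ?n" "e = {xs ! i, xs ! ((i + 1) mod ?n)}"
        unfolding cycle_edges_def by blast
      show "e \<in> pe (xs @ [hd xs])"
      proof (cases "Suc i < ?n")
        case True
        then have "e = {xs ! i, xs ! Suc i}" using i by simp
        then have "e \<in> pe xs" unfolding pe_conv_nth using True by blast
        then show ?thesis using r by simp
      next
        case False
        then have "Suc i = ?n" using i by simp
        then have "i = ?n - 1" by simp
        then have "e = {last xs, hd xs}" using i ne by (simp add: last_conv_nth hd_conv_nth)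
        then show ?thesis using r by simp
      qed
    qed
  next
    show "pe (xs @ [hd xs]) \<subseteq> cycle_edges xs"
    proof
      fix e assume "e \<in> pe (xs @ [hd xs])"
      then have "e = {last xs, hd xs} \<or> e \<in> pe xs" using r by simp
      then show "e \<in> cycle_edges xs"
      proof
        assume "e = {last xs, hd xs}"
        moreover have "{last xs, hd xs} = {xs ! (?n - 1), xs ! ((?n - 1 + 1) mod ?n)}"
          using ne by (simp add: last_conv_nth hd_conv_nth)
        moreover have "?n - 1 < ?n" using ne by simp
        ultimately show ?thesis unfolding cycle_edges_def by blast
      next
        assume "e \<in> pe xs"
        then obtain i where i: "Suc i < ?n" "e = {xs ! i, xs ! Suc i}" unfolding pe_conv_nth by blast
        then have "e = {xs ! i, xs ! ((i + 1) mod ?n)}" by simp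
        then show ?thesis using i unfolding cycle_edges_def by (intro CollectI exI[of _ i]) simp
      qed
    qed
  qed
qed

lemma path_join:
  assumes "path E p" "path E r" "last p = hd r" "set p \<inter> set r = {hd r}"
  shows "path E (p @ tl r)"
proof -
  obtain h t where r: "r = h # t" using assms(2) unfolding path_def by (cases r) auto
  have pne: "p \<noteq> []" using assms(1) unfolding path_def by simp
  have ht: "h \<notin> set t" "distinct t" using assms(2) r unfolding path_def by auto
  have "set p \<inter> set t = {}" using assms(4) ht r by auto
  then have d: "distinct (p @ t)" using assms(1) ht unfolding path_def by simp
  have st: "successively (adjE E) (h # t)" using assms(2) r unfolding path_def by simp
  then have st2: "successively (adjE E) t" "t = [] \<or> adjE E h (hd t)"
    by (auto simp add: successively_Cons)
  have sp: "successively (adjE E) p" using assms(1) unfolding path_def by simp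
  have "last p = h" using assms(3) r by simp
  then have "successively (adjE E) (p @ t)"
    using sp st2 by (simp add: successively_append_iff)
  then show ?thesis using d pne r unfolding path_def by simp
qed

lemma path_rev: "path E p \<Longrightarrow> path E (rev p)"
  unfolding path_def by (auto simp: adjE_sym)

lemma path_rev_iff: "path E (rev p) = path E p"
  using path_rev by fastforce

lemma walk_from_rtranclp:
  assumes "R\<^sup>*\<^sup>* a b"
  shows "\<exists>xs. xs \<noteq> [] \<and> hd xs = a \<and> last xs = b \<and> successively R xs"
  using assms
proof (induction rule: converse_rtranclp_induct)
  case base
  then show ?case by (intro exI[of _ "[b]"]) simp
next
  case (step y z)
  then obtain xs where xs: "xs \<noteq> []" "hd xs = z" "last xs = b" "successively R xs" by blast
  then show ?case using step(1) by (intro exI[of _ "y # xs"]) (simp add: successively_Cons)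
qed

lemma walk_to_path:
  assumes "successively R xs" "xs \<noteq> []"
  shows "\<exists>ys. ys \<noteq> [] \<and> distinct ys \<and> successively R ys \<and> hd ys = hd xs \<and> last ys = last xs \<and> set ys \<subseteq> set xs"
  using assms
proof (induction xs)
  case Nil then show ?case by simp
next
  case (Cons x xs)
  show ?case
  proof (cases "xs = []")
    case True then show ?thesis by (intro exI[of _ "[x]"]) simp
  next
    case False
    have sx: "successively R xs" "R x (hd xs)" using Cons(2) False by (auto simp: successively_Cons)
    obtain ys where ys: "ys \<noteq> []" "distinct ys" "successively R ys" "hd ys = hd xs" "last ys = last xs" "set ys \<subseteq> set xs"
      using Cons(1)[OF sx(1) False] by blast
    show ?thesis
    proof (cases "x \<in> set ys")
      case True
      then obtain ys1 ys2 where sp: "ys = ys1 @ x # ys2" by (meson split_list)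
      have "successively R (x # ys2)" using ys(3) sp by (simp add: successively_append_iff)
      moreover have "distinct (x # ys2)" using ys(2) sp by simp
      moreover have "last (x # ys2) = last (x # xs)" using ys(5) sp False by simp
      moreover have "set (x # ys2) \<subseteq> set (x # xs)" using ys(6) sp by auto
      ultimately show ?thesis by (intro exI[of _ "x # ys2"]) simp
    next
      case False': False
      have "successively R (x # ys)" using ys sx by (simp add: successively_Cons)
      moreover have "distinct (x # ys)" using ys False' by simp
      ultimately show ?thesis using ys False by (intro exI[of _ "x # ys"]) auto
    qed
  qed
qed

lemma walk_first_hit:
  assumes "successively R xs" "xs \<noteq> []" "last xs \<in> W"
  shows "\<exists>ys. ys \<noteq> [] \<and> successively R ys \<and> hd ys = hd xs \<and> last ys \<in> W \<and> set ys \<subseteq> set xs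
     \<and> (\<forall>v\<in>set (butlast ys). v \<notin> W)"
  using assms
proof (induction xs)
  case Nil then show ?case by simp
next
  case (Cons x xs)
  show ?case
  proof (cases "x \<in> W")
    case True then show ?thesis by (intro exI[of _ "[x]"]) simp
  next
    case False
    then have ne: "xs \<noteq> []" using Cons(4) by auto
    have sx: "successively R xs" "R x (hd xs)" using Cons(2) ne by (auto simp: successively_Cons)
    obtain ys where ys: "ys \<noteq> []" "successively R ys" "hd ys = hd xs" "last ys \<in> W" "set ys \<subseteq> set xs"
       "\<forall>v\<in>set (butlast ys). v \<notin> W"
      using Cons(1)[OF sx(1) ne] Cons(4) ne by auto
    have "successively R (x # ys)" using ys sx by (simp add: successively_Cons)
    then show ?thesis using ys False by (intro exI[of _ "x # ys"]) auto
  qed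
qed

lemma successively_all:
  assumes "successively R xs" "\<And>x y. R x y \<Longrightarrow> P y" "xs \<noteq> []" "P (hd xs)"
  shows "\<forall>z\<in>set xs. P z"
  using assms
proof (induction xs)
  case Nil then show ?case by simp
next
  case (Cons x xs)
  show ?case
  proof (cases xs)
    case Nil then show ?thesis using Cons.prems by simp
  next
    case (Cons y ys)
    then have "R x y" "successively R xs" using Cons.prems(1) by auto
    then have "P y" using Cons.prems(2) by blast
    then have "\<forall>z\<in>set xs. P z" using Cons.IH[OF \<open>successively R xs\<close> Cons.prems(2)] Cons by simp
    then show ?thesis using Cons.prems(4) by simp
  qed
qed

definition ear :: "'a set set \<Rightarrow> 'a set \<Rightarrow> 'a list \<Rightarrow> bool" where
  "ear E W Q \<longleftrightarrow> path E Q \<and> length Q \<ge> 2 \<and> hd Q \<in> W \<and> last Q \<in> W \<and> hd Q \<noteq> last Q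
     \<and> (\<forall>v\<in>set Q. v \<in> W \<longrightarrow> v = hd Q \<or> v = last Q)"

lemma ear_rev: "ear E W Q \<Longrightarrow> ear E W (rev Q)"
proof -
  assume a: "ear E W Q"
  then have ne: "Q \<noteq> []" unfolding ear_def path_def by simp
  have "hd (rev Q) = last Q" "last (rev Q) = hd Q" using ne by (simp_all add: hd_rev last_rev)
  then show ?thesis using a path_rev unfolding ear_def by (metis length_rev set_rev)
qed

lemma graph_edge:
  assumes "graph V E" "{a, b} \<in> E"
  shows "a \<in> V" "b \<in> V" "a \<noteq> b"
proof -
  obtain u v where uv: "u \<noteq> v" "{a, b} = {u, v}" "u \<in> V" "v \<in> V"
    using assms unfolding graph_def by meson
  then have "(a = u \<and> b = v) \<or> (a = v \<and> b = u)" by (simp add: doubleton_eq_iff)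
  then show "a \<in> V" "b \<in> V" "a \<noteq> b" using uv by auto
qed

lemma path_vertices:
  assumes "graph V E" "path E Q" "length Q \<ge> 2"
  shows "set Q \<subseteq> V"
proof
  fix v assume v: "v \<in> set Q"
  then obtain i where i: "i < length Q" "Q ! i = v" by (meson in_set_conv_nth)
  have s: "successively (adjE E) Q" using assms(2) unfolding path_def by simp
  show "v \<in> V"
  proof (cases "Suc i < length Q")
    case True
    then have "{Q ! i, Q ! Suc i} \<in> E" using successively_nth[OF s True] by (simp add: adjE_def)
    then show ?thesis using graph_edge[OF assms(1)] i by blast
  next
    case False
    then have "Suc (i - 1) < length Q" "Suc (i - 1) = i" using i assms(3) by auto
    then have "{Q ! (i - 1), Q ! i} \<in> E" using successively_nth[OF s] by (metis adjE_def)
    then show ?thesis using graph_edge[OF assms(1)] i by blast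
  qed
qed

lemma diestel_ear:
  assumes G: "graph V E" "two_connected V E" and W: "W \<subseteq> V" "v \<in> W" "w \<notin> W" "{v, w} \<in> E"
    "w' \<in> W" "w' \<noteq> v"
  shows "\<exists>Q. ear E W Q \<and> {v, w} \<in> pe Q \<and> w \<in> set Q"
proof -
  define R where "R = (\<lambda>x y. x \<in> V - {v} \<and> y \<in> V - {v} \<and> {x, y} \<in> {e\<in>E. v \<notin> e})"
  have wV: "w \<in> V" "w \<noteq> v" using graph_edge[OF G(1) W(4)] by auto
  have "connected_graph (V - {v}) {e\<in>E. v \<notin> e}" using G(2) W(2) W(1) unfolding two_connected_def by blast
  then have cg: "\<forall>a\<in>V - {v}. \<forall>b\<in>V - {v}. R\<^sup>*\<^sup>* a b"
    unfolding connected_graph_def R_def by (elim conjE)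
  have "w \<in> V - {v}" "w' \<in> V - {v}" using wV W by auto
  then have "R\<^sup>*\<^sup>* w w'" using cg by blast
  then obtain xs where xs: "xs \<noteq> []" "hd xs = w" "last xs = w'" "successively R xs"
    using walk_from_rtranclp[of R w w'] by blast
  have "last xs \<in> W" using xs(3) W(5) by simp
  then obtain ys where ys: "ys \<noteq> []" "successively R ys"
    "hd ys = w" "last ys \<in> W" "set ys \<subseteq> set xs" "\<forall>u\<in>set (butlast ys). u \<notin> W"
    using walk_first_hit[OF xs(4) xs(1) \<open>last xs \<in> W\<close>] unfolding xs(2) by blast
  obtain zs where zs: "zs \<noteq> []" "distinct zs" "successively R zs"
    "hd zs = w" "last zs = last ys" "set zs \<subseteq> set ys"
    using walk_to_path[OF ys(2) ys(1)] unfolding ys(3) by blast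
  have Rp: "\<And>x y. R x y \<Longrightarrow> y \<in> V - {v}" unfolding R_def by blast
  have hz: "hd zs \<in> V - {v}" using zs(4) wV by simp
  have zV: "\<forall>z\<in>set zs. z \<in> V - {v}"
    apply (rule successively_all[where P="\<lambda>z. z \<in> V - {v}" and R=R])
    using zs(3) Rp zs(1) hz by auto
  have sadj: "successively (adjE E) zs"
    using zs(3) by (rule successively_mono) (simp add: adjE_def R_def)
  define Q where "Q = v # zs"
  have vz: "v \<notin> set zs" using zV by blast
  have "adjE E v (hd zs)" using W(4) zs(4) by (simp add: adjE_def)
  then have sQ: "successively (adjE E) Q" unfolding Q_def using sadj by (simp add: successively_Cons)
  have pQ: "path E Q" unfolding path_def using sQ zs(2) vz unfolding Q_def by simp
  have lQ: "length Q \<ge> 2" using zs(1) unfolding Q_def by (cases zs) auto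
  have lastQ: "last Q = last ys" using zs unfolding Q_def by simp
  have int: "\<forall>u\<in>set Q. u \<in> W \<longrightarrow> u = hd Q \<or> u = last Q"
  proof (intro ballI impI)
    fix u assume u: "u \<in> set Q" "u \<in> W"
    show "u = hd Q \<or> u = last Q"
    proof (cases "u = v")
      case True then show ?thesis unfolding Q_def by simp
    next
      case False
      then have uy: "u \<in> set ys" using u zs unfolding Q_def by auto
      have "ys = butlast ys @ [last ys]" using ys(1) by simp
      then have "set ys = set (butlast ys) \<union> {last ys}" by (metis set_append empty_set list.set(2) Un_empty_right)
      then have "u = last ys" using uy ys(6) u(2) by blast
      then show ?thesis using lastQ by simp
    qed
  qed
  have "last zs \<in> set zs" using zs(1) by simp
  then have "last Q \<noteq> v" using zV zs(1) unfolding Q_def by auto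
  then have "ear E W Q" unfolding ear_def using pQ lQ int W(2) ys(4) lastQ unfolding Q_def by simp
  moreover have "{v, w} \<in> pe Q" unfolding Q_def using zs by (simp add: pe_Cons)
  moreover have "w \<in> set Q" unfolding Q_def using zs by (cases zs) auto
  ultimately show ?thesis by blast
qed

lemma path_take: "path E Q \<Longrightarrow> 0 < k \<Longrightarrow> path E (take k Q)"
  unfolding path_def
proof (elim conjE, intro conjI)
  assume a: "Q \<noteq> []" "distinct Q" "successively (adjE E) Q" "0 < k"
  show "take k Q \<noteq> []" using a by simp
  show "distinct (take k Q)" using a by simp
  have "successively (adjE E) (take k Q @ drop k Q)" using a by simp
  then show "successively (adjE E) (take k Q)" by (simp only: successively_append_iff)
qed

lemma path_drop: "path E Q \<Longrightarrow> k < length Q \<Longrightarrow> path E (drop k Q)"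
  unfolding path_def
proof (elim conjE, intro conjI)
  assume a: "Q \<noteq> []" "distinct Q" "successively (adjE E) Q" "k < length Q"
  show "drop k Q \<noteq> []" using a by simp
  show "distinct (drop k Q)" using a by simp
  have "successively (adjE E) (take k Q @ drop k Q)" using a by simp
  then show "successively (adjE E) (drop k Q)" by (simp only: successively_append_iff)
qed

lemma last_take_Suc: "k < length xs \<Longrightarrow> last (take (Suc k) xs) = xs ! k"
  by (simp add: take_Suc_conv_app_nth)

lemma last_join: "p \<noteq> [] \<Longrightarrow> r \<noteq> [] \<Longrightarrow> last p = hd r \<Longrightarrow> last (p @ tl r) = last r"
  by (cases r) (auto)

lemma hd_join: "p \<noteq> [] \<Longrightarrow> hd (p @ tl r) = hd p"
  by simp

lemma set_join: "set (p @ tl r) \<subseteq> set p \<union> set r"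
  by (cases r) auto

lemma path_ne: "path E p \<Longrightarrow> p \<noteq> []"
  unfolding path_def by blast

lemma ear_inter: "ear E W Q \<Longrightarrow> v \<in> set Q \<Longrightarrow> v \<in> W \<Longrightarrow> v = hd Q \<or> v = last Q"
  unfolding ear_def by blast

lemma ear_path: "ear E W Q \<Longrightarrow> path E Q"
  unfolding ear_def by blast

lemma ear_ne: "ear E W Q \<Longrightarrow> Q \<noteq> []"
  unfolding ear_def path_def by blast

lemma ear_len: "ear E W Q \<Longrightarrow> length Q \<ge> 2"
  unfolding ear_def by blast

lemma ear_ends: "ear E W Q \<Longrightarrow> hd Q \<in> W \<and> last Q \<in> W \<and> hd Q \<noteq> last Q"
  unfolding ear_def by blast

lemma ear_distinct: "ear E W Q \<Longrightarrow> distinct Q"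
  unfolding ear_def path_def by blast

lemma earI:
  assumes "path E Q" "length Q \<ge> 2" "hd Q \<in> W" "last Q \<in> W" "hd Q \<noteq> last Q"
    "\<And>v. v \<in> set Q \<Longrightarrow> v \<in> W \<Longrightarrow> v = hd Q \<or> v = last Q"
  shows "ear E W Q"
  unfolding ear_def using assms by blast

lemma hd_tl_in: "length Q \<ge> 2 \<Longrightarrow> last Q \<in> set (tl Q)"
  by (cases Q) auto

lemma combine_mid:
  assumes Q: "ear E W Q" and Q': "ear E (W \<union> set Q) Q'"
    and ij: "hd Q' = Q ! i" "last Q' = Q ! j" "i < j" "j < length Q"
    and nW: "hd Q' \<notin> W" "last Q' \<notin> W"
  shows "\<exists>Q''. ear E W Q'' \<and> pe Q' \<subseteq> pe Q''"
proof -
  have dQ: "distinct Q" using ear_distinct[OF Q] .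
  have pQ: "path E Q" and pQ': "path E Q'" using ear_path Q Q' by blast+
  have ne: "Q \<noteq> []" "Q' \<noteq> []" using ear_ne Q Q' by blast+
  have inQ: "\<And>v. v \<in> set Q' \<Longrightarrow> v \<in> set Q \<Longrightarrow> v = hd Q' \<or> v = last Q'"
    using ear_inter[OF Q'] by blast
  define Q1 where "Q1 = take (Suc i) Q"
  have pQ1: "path E Q1" unfolding Q1_def using path_take[OF pQ] by simp
  have lQ1: "last Q1 = hd Q'" unfolding Q1_def using ij last_take_Suc[of i Q] by simp
  have hQ1: "hd Q1 = hd Q" unfolding Q1_def using ne by simp
  have sQ1: "set Q1 \<subseteq> set Q" unfolding Q1_def by (simp add: set_take_subset)
  have "Q ! j \<notin> set Q1"
  proof
    assume "Q ! j \<in> set Q1"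
    then obtain k where k: "k < length Q1" "Q1 ! k = Q ! j" by (meson in_set_conv_nth)
    then have "k \<le> i" "Q ! k = Q ! j" unfolding Q1_def by auto
    moreover have "k < length Q" using \<open>k \<le> i\<close> ij by simp
    ultimately have "k = j" using nth_eq_iff_index_eq[OF dQ _ ij(4)] by blast
    then show False using \<open>k \<le> i\<close> ij by simp
  qed
  have int1: "set Q1 \<inter> set Q' = {hd Q'}"
  proof
    show "set Q1 \<inter> set Q' \<subseteq> {hd Q'}"
    proof
      fix v assume v: "v \<in> set Q1 \<inter> set Q'"
      then have "v = hd Q' \<or> v = last Q'" using inQ sQ1 by blast
      then show "v \<in> {hd Q'}" using v \<open>Q ! j \<notin> set Q1\<close> ij(2) by auto
    qed
    have "Q1 \<noteq> []" using pQ1 unfolding path_def by blast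
    then have "hd Q' \<in> set Q1" using lQ1 last_in_set by metis
    moreover have "hd Q' \<in> set Q'" using ne(2) by simp
    ultimately show "{hd Q'} \<subseteq> set Q1 \<inter> set Q'" by blast
  qed
  define P where "P = Q1 @ tl Q'"
  have pP: "path E P" unfolding P_def using path_join[OF pQ1 pQ' lQ1] int1 by simp
  have peP: "pe P = pe Q1 \<union> pe Q'" unfolding P_def using pe_join[OF path_ne[OF pQ1] ne(2) lQ1] .
  have lP: "last P = Q ! j" unfolding P_def using last_join[OF path_ne[OF pQ1] ne(2) lQ1] ij(2) by simp
  have hP: "hd P = hd Q" unfolding P_def using hQ1 path_ne[OF pQ1] by simp
  define Q2 where "Q2 = drop j Q"
  have pQ2: "path E Q2" unfolding Q2_def using path_drop[OF pQ ij(4)] .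
  have hQ2: "hd Q2 = Q ! j" unfolding Q2_def using ij by (simp add: hd_drop_conv_nth)
  have lQ2: "last Q2 = last Q" unfolding Q2_def using ij by simp
  have d12: "set Q1 \<inter> set Q2 = {}" unfolding Q1_def Q2_def
    using set_take_disj_set_drop_if_distinct[OF dQ, of "Suc i" j] ij by simp
  have "set (tl Q') \<inter> set Q2 \<subseteq> {Q ! j}"
  proof
    fix v assume v: "v \<in> set (tl Q') \<inter> set Q2"
    have "v \<in> set Q'" using v list.set_sel(2)[OF ne(2)] by blast
    moreover have "v \<in> set Q" using v unfolding Q2_def using in_set_dropD by fast
    ultimately have "v \<in> set Q'" "v \<in> set Q" by auto
    then have "v = hd Q' \<or> v = last Q'" using inQ by blast
    moreover have "v \<noteq> hd Q'"
    proof
      assume "v = hd Q'"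
      then have "hd Q' \<in> set (tl Q')" using v by blast
      moreover have "distinct (hd Q' # tl Q')" using ear_distinct[OF Q'] ne(2) by simp
      ultimately show False by simp
    qed
    ultimately show "v \<in> {Q ! j}" using ij by simp
  qed
  moreover have "Q ! j \<in> set P" using last_in_set[OF path_ne[OF pP]] lP by simp
  moreover have "Q ! j \<in> set Q2" using hd_in_set[OF path_ne[OF pQ2]] hQ2 by simp
  moreover have "set P = set Q1 \<union> set (tl Q')" unfolding P_def by simp
  ultimately have int2: "set P \<inter> set Q2 = {hd Q2}" using d12 unfolding hQ2 by blast
  define Q'' where "Q'' = P @ tl Q2"
  have pQ'': "path E Q''" unfolding Q''_def using path_join[OF pP pQ2] lP hQ2 int2 by simp
  have peQ'': "pe Q'' = pe P \<union> pe Q2" unfolding Q''_def using pe_join pP pQ2 lP hQ2 unfolding path_def by metis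
  have hQ'': "hd Q'' = hd Q" unfolding Q''_def using hP pP unfolding path_def by simp
  have lQ'': "last Q'' = last Q" unfolding Q''_def using last_join[of P Q2] pP pQ2 lP hQ2 lQ2 unfolding path_def by simp
  have sQ'': "set Q'' \<subseteq> set Q \<union> set Q'"
  proof -
    have "set Q'' \<subseteq> set P \<union> set Q2" unfolding Q''_def by (rule set_join)
    moreover have "set P \<subseteq> set Q1 \<union> set Q'" unfolding P_def by (rule set_join)
    moreover have "set Q2 \<subseteq> set Q" unfolding Q2_def by (simp add: set_drop_subset)
    ultimately show ?thesis using sQ1 by blast
  qed
  have "length Q'' \<ge> 2"
  proof -
    have "length Q1 \<ge> 1" using pQ1 unfolding path_def by (cases Q1) auto
    moreover have "length (tl Q') \<ge> 1" using ear_len[OF Q'] by simp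
    ultimately have "length P \<ge> 2" unfolding P_def by simp
    then show ?thesis unfolding Q''_def by simp
  qed
  moreover have "\<And>v. v \<in> set Q'' \<Longrightarrow> v \<in> W \<Longrightarrow> v = hd Q'' \<or> v = last Q''"
  proof -
    fix v assume v: "v \<in> set Q''" "v \<in> W"
    show "v = hd Q'' \<or> v = last Q''"
    proof (cases "v \<in> set Q")
      case True then show ?thesis using ear_inter[OF Q True v(2)] hQ'' lQ'' by simp
    next
      case False
      then have "v \<in> set Q'" using v sQ'' by blast
      then have "v = hd Q' \<or> v = last Q'" using ear_inter[OF Q'] v(2) by blast
      then show ?thesis using nW v(2) by blast
    qed
  qed
  ultimately have "ear E W Q''" using ear_ends[OF Q] pQ'' hQ'' lQ'' by (intro earI) auto
  moreover have "pe Q' \<subseteq> pe Q''" using peQ'' peP by blast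
  ultimately show ?thesis by blast
qed

lemma combine_side:
  assumes Q: "ear E W Q" and Q': "ear E (W \<union> set Q) Q'"
    and j: "last Q' = Q ! j" "j < length Q"
    and hW: "hd Q' \<in> W" and nW: "last Q' \<notin> W" and hl: "hd Q' \<noteq> last Q"
  shows "\<exists>Q''. ear E W Q'' \<and> pe Q' \<subseteq> pe Q''"
proof -
  have dQ: "distinct Q" using ear_distinct[OF Q] .
  have pQ: "path E Q" and pQ': "path E Q'" using ear_path Q Q' by blast+
  have ne: "Q \<noteq> []" "Q' \<noteq> []" using ear_ne Q Q' by blast+
  have j0: "j \<noteq> 0"
  proof
    assume "j = 0"
    then have "last Q' = hd Q" using j ne by (simp add: hd_conv_nth)
    then show False using nW ear_ends[OF Q] by simp
  qed
  define Q2 where "Q2 = drop j Q"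
  have pQ2: "path E Q2" unfolding Q2_def using path_drop[OF pQ j(2)] .
  have hQ2: "hd Q2 = last Q'" unfolding Q2_def using j by (simp add: hd_drop_conv_nth)
  have lQ2: "last Q2 = last Q" unfolding Q2_def using j by simp
  have hdQ: "hd Q \<notin> set Q2"
  proof
    assume "hd Q \<in> set Q2"
    then obtain k where k: "k < length Q2" "Q2 ! k = hd Q" by (meson in_set_conv_nth)
    then have "Q ! (j + k) = Q ! 0" "j + k < length Q" unfolding Q2_def using ne by (auto simp: hd_conv_nth)
    then have "j + k = 0" using nth_eq_iff_index_eq[OF dQ] by (metis gr_zeroI less_nat_zero_code)
    then show False using j0 by simp
  qed
  have int: "set Q' \<inter> set Q2 = {hd Q2}"
  proof
    show "set Q' \<inter> set Q2 \<subseteq> {hd Q2}"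
    proof
      fix v assume v: "v \<in> set Q' \<inter> set Q2"
      then have "v \<in> set Q" unfolding Q2_def using in_set_dropD by fast
      then have "v = hd Q' \<or> v = last Q'" using ear_inter[OF Q'] v by blast
      moreover have "v \<noteq> hd Q'"
      proof
        assume "v = hd Q'"
        then have "v \<in> W" "v \<in> set Q" using hW \<open>v \<in> set Q\<close> by auto
        then have "v = hd Q \<or> v = last Q" using ear_inter[OF Q] by blast
        then show False using hl \<open>v = hd Q'\<close> hdQ v by auto
      qed
      ultimately show "v \<in> {hd Q2}" using hQ2 by simp
    qed
    show "{hd Q2} \<subseteq> set Q' \<inter> set Q2"
      using hQ2 last_in_set[OF ne(2)] hd_in_set[OF path_ne[OF pQ2]] by simp
  qed
  define Q'' where "Q'' = Q' @ tl Q2"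
  have pQ'': "path E Q''" unfolding Q''_def using path_join[OF pQ' pQ2] hQ2 int by simp
  have peQ'': "pe Q'' = pe Q' \<union> pe Q2" unfolding Q''_def using pe_join[OF ne(2) path_ne[OF pQ2]] hQ2 by simp
  have hQ'': "hd Q'' = hd Q'" unfolding Q''_def using ne by simp
  have lQ'': "last Q'' = last Q" unfolding Q''_def using last_join[OF ne(2) path_ne[OF pQ2]] hQ2 lQ2 by simp
  have "length Q'' \<ge> 2" unfolding Q''_def using ear_len[OF Q'] by simp
  moreover have "\<And>v. v \<in> set Q'' \<Longrightarrow> v \<in> W \<Longrightarrow> v = hd Q'' \<or> v = last Q''"
  proof -
    fix v assume v: "v \<in> set Q''" "v \<in> W"
    show "v = hd Q'' \<or> v = last Q''"
    proof (cases "v \<in> set Q'")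
      case True
      then have "v = hd Q' \<or> v = last Q'" using ear_inter[OF Q'] v(2) by blast
      then show ?thesis using nW v(2) hQ'' by auto
    next
      case False
      then have "v \<in> set (tl Q2)" using v(1) unfolding Q''_def by simp
      then have "v \<in> set Q2" by (meson list.set_sel(2) path_ne[OF pQ2])
      then have "v \<in> set Q" unfolding Q2_def using in_set_dropD by fast
      then have "v = hd Q \<or> v = last Q" using ear_inter[OF Q] v(2) by blast
      then show ?thesis using hdQ \<open>v \<in> set Q2\<close> lQ'' by auto
    qed
  qed
  moreover have "last Q \<in> W" using ear_ends[OF Q] by blast
  ultimately have "ear E W Q''" using pQ'' hQ'' lQ'' hW hl by (intro earI) auto
  moreover have "pe Q' \<subseteq> pe Q''" using peQ'' by blast
  ultimately show ?thesis by blast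
qed

lemma ear_rev_iff: "ear E W (rev Q) = ear E W Q"
  using ear_rev by fastforce

lemma combine_side2:
  assumes Q: "ear E W Q" and Q': "ear E (W \<union> set Q) Q'"
    and hW: "hd Q' \<in> W" and nW: "last Q' \<notin> W"
  shows "\<exists>Q''. ear E W Q'' \<and> pe Q' \<subseteq> pe Q''"
proof -
  have "last Q' \<in> W \<union> set Q" using ear_ends[OF Q'] by blast
  then have lQ: "last Q' \<in> set Q" using nW by blast
  show ?thesis
  proof (cases "hd Q' = last Q")
    case False
    obtain j where "j < length Q" "Q ! j = last Q'" using lQ by (meson in_set_conv_nth)
    then show ?thesis using combine_side[OF Q Q' _ _ hW nW False] by metis
  next
    case True
    have Qr: "ear E W (rev Q)" using ear_rev[OF Q] .
    have Q'r: "ear E (W \<union> set (rev Q)) Q'" using Q' by simp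
    have "hd Q' \<noteq> last (rev Q)"
      using True ear_ends[OF Q] ear_ne[OF Q] by (auto simp add: last_rev)
    moreover obtain j where "j < length (rev Q)" "rev Q ! j = last Q'" using lQ by (metis in_set_conv_nth set_rev)
    ultimately show ?thesis using combine_side[OF Qr Q'r _ _ hW nW] by metis
  qed
qed

lemma ear_combine:
  assumes Q: "ear E W Q" and Q': "ear E (W \<union> set Q) Q'"
  shows "\<exists>Q''. ear E W Q'' \<and> pe Q' \<subseteq> pe Q''"
proof -
  have ends: "hd Q' \<in> W \<union> set Q" "last Q' \<in> W \<union> set Q" "hd Q' \<noteq> last Q'" using ear_ends[OF Q'] by auto
  have neQ': "Q' \<noteq> []" using ear_ne[OF Q'] .
  have Q'r: "ear E (W \<union> set Q) (rev Q')" using ear_rev[OF Q'] .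
  have hr: "hd (rev Q') = last Q'" "last (rev Q') = hd Q'" using neQ' by (simp_all add: hd_rev last_rev)
  show ?thesis
  proof (cases "hd Q' \<in> W")
    case hW: True
    show ?thesis
    proof (cases "last Q' \<in> W")
      case True
      have "ear E W Q'"
      proof (rule earI)
        show "path E Q'" "length Q' \<ge> 2" using ear_path[OF Q'] ear_len[OF Q'] by auto
        show "hd Q' \<in> W" "last Q' \<in> W" "hd Q' \<noteq> last Q'" using hW True ends by auto
        show "\<And>v. v \<in> set Q' \<Longrightarrow> v \<in> W \<Longrightarrow> v = hd Q' \<or> v = last Q'"
          using ear_inter[OF Q'] by blast
      qed
      then show ?thesis by blast
    next
      case False
      show ?thesis using combine_side2[OF Q Q' hW False] .
    qed
  next
    case nhW: False
    show ?thesis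
    proof (cases "last Q' \<in> W")
      case True
      obtain Q'' where "ear E W Q''" "pe (rev Q') \<subseteq> pe Q''"
        using combine_side2[OF Q Q'r] True nhW hr by auto
      then show ?thesis by (metis pe_rev)
    next
      case False
      obtain i where i: "i < length Q" "Q ! i = hd Q'" using ends(1) nhW by (metis Un_iff in_set_conv_nth)
      obtain j where j: "j < length Q" "Q ! j = last Q'" using ends(2) False by (metis Un_iff in_set_conv_nth)
      have "i \<noteq> j" using i j ends(3) by auto
      then show ?thesis
      proof (cases "i < j")
        case True
        show ?thesis using combine_mid[OF Q Q' i(2)[symmetric] j(2)[symmetric] True j(1) nhW False] .
      next
        case False': False
        then have "j < i" using \<open>i \<noteq> j\<close> by simp
        obtain Q'' where "ear E W Q''" "pe (rev Q') \<subseteq> pe Q''"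
          using combine_mid[OF Q Q'r, of j i] hr j i \<open>j < i\<close> nhW False by auto
        then show ?thesis by (metis pe_rev)
      qed
    qed
  qed
qed

lemma ear_lemma_aux:
  assumes G: "graph V E" "two_connected V E" and z: "{u, v} \<in> E"
  shows "successively (\<lambda>x y. x \<in> V \<and> y \<in> V \<and> {x, y} \<in> E) q \<Longrightarrow> q \<noteq> [] \<Longrightarrow> last q = u \<Longrightarrow> W \<subseteq> V
    \<Longrightarrow> hd q \<in> W \<Longrightarrow> a \<in> W \<Longrightarrow> b \<in> W \<Longrightarrow> a \<noteq> b \<Longrightarrow> \<exists>Q. ear E W Q \<and> {u, v} \<in> pe Q"
proof (induction q arbitrary: W)
  case Nil then show ?case by simp
next
  case (Cons q0 rest)
  have uv: "u \<in> V" "v \<in> V" "u \<noteq> v" using graph_edge[OF G(1) z] by auto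
  have "\<exists>w'. w' \<in> W \<and> w' \<noteq> q0" using Cons.prems(6-8) by metis
  then obtain w' where w': "w' \<in> W" "w' \<noteq> q0" by blast
  show ?case
  proof (cases rest)
    case Nil
    then have q0u: "q0 = u" using Cons.prems(3) by simp
    have uW: "u \<in> W" using Cons.prems(5) q0u by simp
    show ?thesis
    proof (cases "v \<in> W")
      case True
      have "ear E W [u, v]"
      proof (rule earI)
        show "path E [u, v]" unfolding path_def using uv z by (simp add: adjE_def)
      qed (use uW True uv in auto)
      then show ?thesis by (intro exI[of _ "[u, v]"]) simp
    next
      case False
      show ?thesis using diestel_ear[OF G Cons.prems(4) uW False z, of w'] w' q0u by blast
    qed
  next
    case (Cons q1 rest')
    have R: "q0 \<in> V" "q1 \<in> V" "{q0, q1} \<in> E" "successively (\<lambda>x y. x \<in> V \<and> y \<in> V \<and> {x, y} \<in> E) rest"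
      using Cons.prems(1) Cons by auto
    have lr: "last rest = u" "rest \<noteq> []" using Cons.prems(3) Cons by auto
    have q0W: "q0 \<in> W" using Cons.prems(5) by simp
    show ?thesis
    proof (cases "q1 \<in> W")
      case True
      have "hd rest \<in> W" using True Cons by simp
      then show ?thesis using Cons.IH[OF R(4) lr(2) lr(1) Cons.prems(4) _ Cons.prems(6-8)] by blast
    next
      case False
      obtain Q where Q: "ear E W Q" "q1 \<in> set Q"
        using diestel_ear[OF G Cons.prems(4) q0W False R(3) w'] by blast
      have QV: "set Q \<subseteq> V" using path_vertices[OF G(1) ear_path[OF Q(1)] ear_len[OF Q(1)]] .
      have W'V: "W \<union> set Q \<subseteq> V" using QV Cons.prems(4) by blast
      have "hd rest \<in> W \<union> set Q" using Q(2) Cons by simp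
      then obtain Q' where Q': "ear E (W \<union> set Q) Q'" "{u, v} \<in> pe Q'"
        using Cons.IH[OF R(4) lr(2) lr(1) W'V _ _ _ Cons.prems(8)] Cons.prems(6,7) by blast
      obtain Q'' where "ear E W Q''" "pe Q' \<subseteq> pe Q''" using ear_combine[OF Q(1) Q'(1)] by blast
      then show ?thesis using Q'(2) by blast
    qed
  qed
qed

lemma ear_lemma:
  assumes G: "graph V E" "two_connected V E" and W: "W \<subseteq> V" "a \<in> W" "b \<in> W" "a \<noteq> b" and z: "z \<in> E"
  shows "\<exists>Q. ear E W Q \<and> z \<in> pe Q"
proof -
  have "\<exists>u v. u \<noteq> v \<and> z = {u, v} \<and> u \<in> V \<and> v \<in> V" using G(1) z unfolding graph_def by (elim ballE) auto
  then obtain u v where uv: "z = {u, v}" "u \<in> V" "v \<in> V" by blast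
  have "connected_graph V E" using G(2) unfolding two_connected_def by blast
  then have cg: "\<forall>x\<in>V. \<forall>y\<in>V. (\<lambda>x y. x \<in> V \<and> y \<in> V \<and> {x, y} \<in> E)\<^sup>*\<^sup>* x y"
    unfolding connected_graph_def by (elim conjE)
  have "a \<in> V" using W by blast
  then have aa: "(\<lambda>x y. x \<in> V \<and> y \<in> V \<and> {x, y} \<in> E)\<^sup>*\<^sup>* a u" using cg uv by blast
  then obtain q where q: "q \<noteq> []" "hd q = a" "last q = u" "successively (\<lambda>x y. x \<in> V \<and> y \<in> V \<and> {x, y} \<in> E) q"
    using walk_from_rtranclp[OF aa] by blast
  have "{u, v} \<in> E" using z uv by simp
  have "hd q \<in> W" using q(2) W(2) by simp
  from ear_lemma_aux[OF G \<open>{u, v} \<in> E\<close> q(4) q(1) q(3) W(1) this W(2-4)] show ?thesis unfolding uv(1) .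
qed

lemma succ_iff_pe: "successively (adjE E) l \<longleftrightarrow> pe l \<subseteq> E"
  by (induction l rule: pe.induct) (auto simp: adjE_def)

lemma len2_path: "length p = 2 \<Longrightarrow> p = [hd p, last p]"
  by (cases p rule: pe.cases) auto

definition circ2 :: "'a set set \<Rightarrow> 'a list \<Rightarrow> 'a list \<Rightarrow> bool" where
  "circ2 E p q \<longleftrightarrow> path E p \<and> path E q \<and> hd p = hd q \<and> last p = last q \<and> hd p \<noteq> last p
     \<and> set p \<inter> set q = {hd p, last p} \<and> length p + length q \<ge> 5"

lemma circ2_sym: "circ2 E p q \<Longrightarrow> circ2 E q p"
  unfolding circ2_def by (auto simp: Int_commute)

lemma two_paths_circuit:
  assumes G: "graph V E" and c: "circ2 E p q"
  shows "is_circuit V E (pe p \<union> pe q)"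
proof -
  have pp: "path E p" "path E q" and hl: "hd p = hd q" "last p = last q" "hd p \<noteq> last p"
    and int: "set p \<inter> set q = {hd p, last p}" and len: "length p + length q \<ge> 5"
    using c unfolding circ2_def by auto
  obtain a b where ab: "hd p = a" "last p = b" by blast
  have pne: "p \<noteq> []" "q \<noteq> []" using pp path_ne by blast+
  obtain t where qt: "q = a # t" using pne(2) hl(1) ab by (cases q) auto
  have tne: "t \<noteq> []"
  proof
    assume "t = []"
    then have "hd q = last q" using qt by simp
    then show False using hl by simp
  qed
  obtain m where tm: "t = m @ [b]"
    using tne hl(2) qt ab by (metis append_butlast_last_id last_ConsR)
  have q: "q = a # m @ [b]" using qt tm by simp
  have dq: "distinct q" using pp(2) unfolding path_def by blast
  have dp: "distinct p" using pp(1) unfolding path_def by blast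
  have m1: "a \<notin> set m" "b \<notin> set m" "distinct m" using dq q by auto
  have mpd: "set m \<inter> set p = {}"
  proof (rule ccontr)
    assume "set m \<inter> set p \<noteq> {}"
    then obtain x where x: "x \<in> set m" "x \<in> set p" by blast
    then have "x \<in> set p \<inter> set q" using q by simp
    then have "x = a \<or> x = b" using int ab by simp
    then show False using x m1 by blast
  qed
  define xs where "xs = p @ rev m"
  have dxs: "distinct xs" unfolding xs_def using dp m1 mpd by auto
  have lxs: "length xs \<ge> 3" unfolding xs_def using len q by simp
  have hxs: "hd xs = a" unfolding xs_def using pne ab
    by (simp add: hd_append)
  have rq: "rev q = b # rev m @ [a]" using q by simp
  have e1: "xs @ [hd xs] = p @ tl (rev q)" using hxs unfolding xs_def rq by simp
  have e2: "last p = hd (rev q)" using rq ab by simp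
  have xne: "xs \<noteq> []" using dxs lxs by auto
  have ce: "cycle_edges xs = pe p \<union> pe q"
  proof -
    have "cycle_edges xs = pe (p @ tl (rev q))" using cycle_edges_conv[OF xne] e1 by simp
    also have "\<dots> = pe p \<union> pe (rev q)" using pe_join[OF pne(1) _ e2] pne(2) by simp
    finally show ?thesis by (simp add: pe_rev)
  qed
  have lp2: "length p \<ge> 2" using pne hl(3) by (cases p rule: pe.cases) auto
  have lq2: "length q \<ge> 2" using q by simp
  have "set xs \<subseteq> V"
  proof -
    have "set p \<subseteq> V" using path_vertices[OF G pp(1) lp2] .
    moreover have "set q \<subseteq> V" using path_vertices[OF G pp(2) lq2] .
    ultimately show ?thesis unfolding xs_def using q by auto
  qed
  moreover have "cycle_edges xs \<subseteq> E"
  proof -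
    have "pe p \<subseteq> E" "pe q \<subseteq> E" using pe_sub_E pp unfolding path_def by blast+
    then show ?thesis using ce by simp
  qed
  ultimately show ?thesis unfolding is_circuit_def using dxs lxs ce by blast
qed

lemma split2:
  assumes "path E r" "k < length r"
  shows "path E (take (Suc k) r)" "path E (drop k r)" "hd (take (Suc k) r) = hd r"
    "last (take (Suc k) r) = r ! k" "hd (drop k r) = r ! k" "last (drop k r) = last r"
    "set (take (Suc k) r) \<inter> set (drop k r) = {r ! k}"
    "set (take (Suc k) r) \<union> set (drop k r) = set r"
    "pe (take (Suc k) r) \<union> pe (drop k r) = pe r"
    "r = take (Suc k) r @ tl (drop k r)"
proof -
  have ne: "r \<noteq> []" using assms path_ne by blast
  have d: "distinct r" using assms(1) unfolding path_def by blast
  show "path E (take (Suc k) r)" using path_take[OF assms(1)] by simp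
  show "path E (drop k r)" using path_drop[OF assms] .
  show "hd (take (Suc k) r) = hd r" using ne by simp
  show lt: "last (take (Suc k) r) = r ! k" using last_take_Suc[OF assms(2)] .
  show hd: "hd (drop k r) = r ! k" using assms(2) by (simp add: hd_drop_conv_nth)
  show "last (drop k r) = last r" using assms(2) by simp
  show eq: "r = take (Suc k) r @ tl (drop k r)"
    by (simp only: tl_drop drop_Suc[symmetric] append_take_drop_id)
  show "set (take (Suc k) r) \<union> set (drop k r) = set r"
  proof -
    have "set r = set (take k r) \<union> set (drop k r)" by (metis append_take_drop_id set_append)
    moreover have "set (take (Suc k) r) = set (take k r) \<union> {r ! k}"
      using assms(2) by (simp add: take_Suc_conv_app_nth)
    moreover have "r ! k \<in> set (drop k r)" using hd assms(2)
      by (metis Cons_nth_drop_Suc list.set_intros(1))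
    ultimately show ?thesis by blast
  qed
  show "set (take (Suc k) r) \<inter> set (drop k r) = {r ! k}"
  proof -
    have "set (take (Suc k) r) = set (take k r) \<union> {r ! k}"
      using assms(2) by (simp add: take_Suc_conv_app_nth)
    moreover have "set (take k r) \<inter> set (drop k r) = {}"
      using set_take_disj_set_drop_if_distinct[OF d, of k k] by simp
    moreover have "r ! k \<in> set (drop k r)" using hd assms(2)
      by (metis Cons_nth_drop_Suc list.set_intros(1))
    ultimately show ?thesis by blast
  qed
  have "take (Suc k) r \<noteq> []" "drop k r \<noteq> []" using assms(2) by auto
  then show "pe (take (Suc k) r) \<union> pe (drop k r) = pe r"
    using pe_join[of "take (Suc k) r" "drop k r"] lt hd eq by metis
qed

lemma split3:
  assumes r: "path E r" and ij: "i < j" "j < length r"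
  shows "path E (take (Suc i) r)" "path E (drop i (take (Suc j) r))" "path E (drop j r)"
    "hd (take (Suc i) r) = hd r" "last (take (Suc i) r) = r ! i"
    "hd (drop i (take (Suc j) r)) = r ! i" "last (drop i (take (Suc j) r)) = r ! j"
    "hd (drop j r) = r ! j" "last (drop j r) = last r"
    "set (take (Suc i) r) \<inter> set (drop i (take (Suc j) r)) = {r ! i}"
    "set (drop i (take (Suc j) r)) \<inter> set (drop j r) = {r ! j}"
    "set (take (Suc i) r) \<inter> set (drop j r) = {}"
    "set r = set (take (Suc i) r) \<union> set (drop i (take (Suc j) r)) \<union> set (drop j r)"
    "pe r = pe (take (Suc i) r) \<union> pe (drop i (take (Suc j) r)) \<union> pe (drop j r)"
    "length (drop i (take (Suc j) r)) \<ge> 2"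
proof -
  let ?P = "take (Suc j) r"
  have d: "distinct r" using r unfolding path_def by blast
  note s1 = split2[OF r ij(2)]
  have iP: "i < length ?P" using ij by simp
  note s2 = split2[OF s1(1) iP]
  have tt: "take (Suc i) ?P = take (Suc i) r" using ij by (simp add: min_def)
  have Pi: "?P ! i = r ! i" using ij by simp
  show "path E (take (Suc i) r)" using s2(1) tt by simp
  show "path E (drop i ?P)" using s2(2) .
  show "path E (drop j r)" using s1(2) .
  show "hd (take (Suc i) r) = hd r" using s2(3) tt s1(3) by simp
  show "last (take (Suc i) r) = r ! i" using s2(4) tt Pi by simp
  show "hd (drop i ?P) = r ! i" using s2(5) Pi by simp
  show "last (drop i ?P) = r ! j" using s2(6) s1(4) by simp
  show "hd (drop j r) = r ! j" using s1(5) .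
  show "last (drop j r) = last r" using s1(6) .
  show "set (take (Suc i) r) \<inter> set (drop i ?P) = {r ! i}" using s2(7) tt Pi by simp
  show "set (drop i ?P) \<inter> set (drop j r) = {r ! j}"
  proof -
    have "set (drop i ?P) \<subseteq> set ?P" by (rule set_drop_subset)
    moreover have "r ! j \<in> set (drop i ?P)" using s2(6) s1(4) s2(2) path_ne last_in_set by metis
    ultimately show ?thesis using s1(7) by blast
  qed
  show "set (take (Suc i) r) \<inter> set (drop j r) = {}"
    using set_take_disj_set_drop_if_distinct[OF d, of "Suc i" j] ij by simp
  show "set r = set (take (Suc i) r) \<union> set (drop i ?P) \<union> set (drop j r)"
    using s1(8) s2(8) tt by simp
  show "pe r = pe (take (Suc i) r) \<union> pe (drop i ?P) \<union> pe (drop j r)"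
    using s1(9) s2(9) tt by simp
  show "length (drop i ?P) \<ge> 2" using ij by simp
qed

lemma cycle_edges_rotate1: "xs \<noteq> [] \<Longrightarrow> cycle_edges (rotate1 xs) = cycle_edges xs"
proof -
  assume ne: "xs \<noteq> []"
  then obtain a t where xs: "xs = a # t" by (cases xs) auto
  show ?thesis
  proof (cases "t = []")
    case True then show ?thesis using xs by simp
  next
    case False
    have "cycle_edges (rotate1 xs) = pe ((t @ [a]) @ [hd t])" using cycle_edges_conv[of "t @ [a]"] xs False by simp
    also have "\<dots> = pe (t @ [a]) \<union> {{a, hd t}}" using pe_append[of "t @ [a]" "[hd t]"] by simp
    also have "\<dots> = pe (a # t @ [a])" using False by (simp add: pe_Cons)
    also have "\<dots> = cycle_edges xs" using cycle_edges_conv[of xs] xs by simp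
    finally show ?thesis .
  qed
qed

lemma cycle_edges_rotate: "xs \<noteq> [] \<Longrightarrow> cycle_edges (rotate n xs) = cycle_edges xs"
proof (induction n)
  case 0 then show ?case by simp
next
  case (Suc n)
  have "rotate n xs \<noteq> []" using Suc.prems by simp
  then show ?case using Suc cycle_edges_rotate1[of "rotate n xs"] by (simp add: rotate_Suc)
qed

lemma split_circ0:
  assumes d: "distinct ys" "length ys \<ge> 3" "cycle_edges ys \<subseteq> E" and j: "0 < j" "j < length ys"
  shows "circ2 E (take (Suc j) ys) (hd ys # rev (drop j ys))
    \<and> hd (take (Suc j) ys) = ys ! 0 \<and> last (take (Suc j) ys) = ys ! j
    \<and> pe (take (Suc j) ys) \<union> pe (hd ys # rev (drop j ys)) = cycle_edges ys
    \<and> set (take (Suc j) ys) \<union> set (hd ys # rev (drop j ys)) = set ys"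
proof -
  let ?p = "take (Suc j) ys" and ?D = "drop j ys"
  let ?q = "hd ys # rev ?D"
  have ne: "ys \<noteq> []" using j by auto
  have ce: "cycle_edges ys = pe (ys @ [hd ys])" using cycle_edges_conv[OF ne] .
  have eq: "ys @ [hd ys] = ?p @ tl (?D @ [hd ys])"
  proof -
    have "tl (?D @ [hd ys]) = drop (Suc j) ys @ [hd ys]" using j by (simp add: drop_Suc tl_drop)
    then show ?thesis by simp
  qed
  have lp: "last ?p = hd (?D @ [hd ys])" using j by (simp add: last_take_Suc hd_drop_conv_nth)
  have pne: "?p \<noteq> []" using ne by simp
  have pej: "pe (ys @ [hd ys]) = pe ?p \<union> pe (?D @ [hd ys])" using eq pe_join[OF pne _ lp] by simp
  have peq: "pe ?q = pe (?D @ [hd ys])" using pe_rev[of "?D @ [hd ys]"] by simp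
  have pp: "path E ?p"
  proof -
    have "pe ?p \<subseteq> E" using pej ce d(3) by blast
    then show ?thesis unfolding path_def using d(1) ne by (simp add: succ_iff_pe)
  qed
  have h0: "hd ys = ys ! 0" using ne by (simp add: hd_conv_nth)
  have hnD: "hd ys \<notin> set ?D"
  proof
    assume "hd ys \<in> set ?D"
    then obtain k where k: "k < length ?D" "?D ! k = ys ! 0" using h0 by (metis in_set_conv_nth)
    then have "ys ! (j + k) = ys ! 0" "j + k < length ys" using j by auto
    then have "j + k = 0" using nth_eq_iff_index_eq[OF d(1)] j by (metis gr_zeroI less_nat_zero_code)
    then show False using j by simp
  qed
  have pq: "path E ?q"
  proof -
    have "pe ?q \<subseteq> E" using pej ce d(3) peq by blast
    moreover have "distinct ?q" using hnD d(1) by simp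
    ultimately show ?thesis unfolding path_def by (simp add: succ_iff_pe)
  qed
  have hp: "hd ?p = ys ! 0" using ne h0 by simp
  have lpp: "last ?p = ys ! j" using j by (simp add: last_take_Suc)
  have lq: "last ?q = ys ! j" using j by (simp add: last_rev hd_drop_conv_nth)
  have hq: "hd ?q = ys ! 0" using h0 by simp
  have n0j: "ys ! 0 \<noteq> ys ! j"
  proof
    assume "ys ! 0 = ys ! j"
    moreover have "0 < length ys" using j by linarith
    ultimately have "0 = j" using nth_eq_iff_index_eq[OF d(1) _ j(2)] by blast
    then show False using j by simp
  qed
  have ipd: "set ?p \<inter> set ?D = {ys ! j}"
  proof -
    have dd: "distinct ys" using d(1) .
    have "set (take j ys) \<inter> set ?D = {}" using set_take_disj_set_drop_if_distinct[OF dd, of j j] by simp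
    moreover have "set ?p = set (take j ys) \<union> {ys ! j}" using j by (simp add: take_Suc_conv_app_nth)
    moreover have "ys ! j \<in> set ?D" using j by (metis Cons_nth_drop_Suc list.set_intros(1))
    ultimately show ?thesis by blast
  qed
  have "hd ys \<in> set ?p" using pne hd_in_set hp h0 by metis
  then have int: "set ?p \<inter> set ?q = {hd ?p, last ?p}" using ipd hp lpp h0 by auto
  have len: "length ?p + length ?q \<ge> 5" using j d(2) by simp
  have c2: "circ2 E ?p ?q" unfolding circ2_def using pp pq hp hq lpp lq n0j int len by simp
  have "pe ?p \<union> pe ?q = cycle_edges ys" using ce pej peq by simp
  moreover have "set ?p \<union> set ?q = set ys"
  proof -
    have "set ys = set (take (Suc j) ys) \<union> set (drop (Suc j) ys)" by (metis append_take_drop_id set_append)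
    moreover have "set (drop (Suc j) ys) \<subseteq> set ?D" by (metis set_drop_subset drop_drop plus_1_eq_Suc add.commute)
    moreover have "set ?D \<subseteq> set ys" by (rule set_drop_subset)
    moreover have "hd ys \<in> set ys" using ne by simp
    ultimately show ?thesis by auto
  qed
  ultimately show ?thesis using c2 hp lpp by simp
qed

lemma mod_ne1: "(n::nat) \<ge> 3 \<Longrightarrow> i < n \<Longrightarrow> (i + 1) mod n \<noteq> (i + n - 1) mod n"
proof -
  assume n: "n \<ge> 3" "i < n"
  show ?thesis
  proof (cases "i = 0")
    case True
    then show ?thesis using n by simp
  next
    case False
    then have "(i + n - 1) mod n = i - 1" using n
      by (metis Nat.add_diff_assoc2 One_nat_def Suc_leI add_diff_cancel_left' le_add_diff_inverse2 less_imp_diff_less mod_add_self2 mod_less not_gr_zero)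
    moreover have "(i + 1) mod n \<noteq> i - 1"
    proof (cases "i + 1 < n")
      case True then show ?thesis using False by simp
    next
      case False': False
      then have "i + 1 = n" using n by simp
      then show ?thesis using n False by simp
    qed
    ultimately show ?thesis by simp
  qed
qed

lemma mod_ne2: "(n::nat) \<ge> 3 \<Longrightarrow> a mod n \<noteq> (a + 2) mod n"
proof
  assume n: "n \<ge> 3" and eq: "a mod n = (a + 2) mod n"
  have r: "a mod n < n" using n by simp
  have "(a + 2) mod n = (a mod n + 2) mod n" by (metis mod_add_left_eq)
  then have eq2: "a mod n = (a mod n + 2) mod n" using eq by simp
  show False
  proof (cases "a mod n + 2 < n")
    case True
    then show False using eq2 by simp
  next
    case False
    have lt: "a mod n + 2 - n < n" using r n by linarith
    have "(a mod n + 2) mod n = (a mod n + 2 - n) mod n" using False by (simp add: le_mod_geq)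
    then have "(a mod n + 2) mod n = a mod n + 2 - n" using lt by simp
    then show False using eq2 n False r by linarith
  qed
qed

lemma mod_ne0: "(n::nat) \<ge> 3 \<Longrightarrow> a mod n \<noteq> (a + 1) mod n"
proof
  assume n: "n \<ge> 3" and eq: "a mod n = (a + 1) mod n"
  have r: "a mod n < n" using n by simp
  have "(a + 1) mod n = (a mod n + 1) mod n" by (metis mod_add_left_eq)
  then have eq2: "a mod n = (a mod n + 1) mod n" using eq by simp
  show False
  proof (cases "a mod n + 1 < n")
    case True
    then show False using eq2 by simp
  next
    case False
    then have "a mod n + 1 = n" using r by simp
    then show False using eq2 n by simp
  qed
qed

lemma mod_pred_succ: "(x::nat) < n \<Longrightarrow> ((x + 1) mod n + n - 1) mod n = x"
proof (cases "x + 1 < n")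
  case True
  assume "x < n"
  then have "(x + 1) mod n + n - 1 = x + n" using True by simp
  then show ?thesis using \<open>x < n\<close> by simp
next
  case False
  assume "x < n"
  then have "x + 1 = n" using False by simp
  then show ?thesis by simp
qed

lemma ce_mem: "i < length xs \<Longrightarrow> {xs ! i, xs ! ((i + 1) mod length xs)} \<in> cycle_edges xs"
  unfolding cycle_edges_def by (rule CollectI, rule exI[of _ i]) simp

lemma circ_at:
  assumes d: "distinct xs" "length xs \<ge> 3" and h: "h \<in> cycle_edges xs" "v \<in> h"
  shows "\<exists>A B. A \<in> cycle_edges xs \<and> B \<in> cycle_edges xs \<and> A \<noteq> B \<and> v \<in> A \<and> v \<in> B
          \<and> (\<forall>k\<in>cycle_edges xs. v \<in> k \<longrightarrow> k = A \<or> k = B)"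
proof -
  let ?n = "length xs"
  have n0: "?n > 0" using d(2) by linarith
  obtain j where j: "j < ?n" "h = {xs ! j, xs ! ((j + 1) mod ?n)}" using h(1) unfolding cycle_edges_def by blast
  obtain i where i: "i < ?n" "v = xs ! i"
  proof -
    have "v = xs ! j \<or> v = xs ! ((j + 1) mod ?n)" using h(2) j by simp
    moreover have "(j + 1) mod ?n < ?n" using n0 by simp
    ultimately show ?thesis using that j by blast
  qed
  define A where "A = {xs ! i, xs ! ((i + 1) mod ?n)}"
  define i' where "i' = (i + ?n - 1) mod ?n"
  have i'n: "i' < ?n" unfolding i'_def using n0 by simp
  have i'1: "(i' + 1) mod ?n = i"
  proof -
    have "(i' + 1) mod ?n = ((i + ?n - 1) + 1) mod ?n" unfolding i'_def by (metis mod_add_left_eq)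
    also have "\<dots> = (i + ?n) mod ?n" using n0 by simp
    also have "\<dots> = i" using i by simp
    finally show ?thesis .
  qed
  define B where "B = {xs ! i', xs ! ((i' + 1) mod ?n)}"
  have AZ: "A \<in> cycle_edges xs" unfolding A_def using ce_mem i(1) by blast
  have BZ: "B \<in> cycle_edges xs" unfolding B_def using ce_mem i'n by blast
  have vA: "v \<in> A" "v \<in> B" unfolding A_def B_def using i i'1 by auto
  have AB: "A \<noteq> B"
  proof
    assume "A = B"
    then have eq: "{xs ! i, xs ! ((i + 1) mod ?n)} = {xs ! i', xs ! i}" unfolding A_def B_def i'1 by simp
    have "(i + 1) mod ?n \<noteq> i" using mod_ne0[OF d(2), of i] i by simp
    then have ne1: "xs ! ((i + 1) mod ?n) \<noteq> xs ! i" using d(1) i n0 by (simp add: nth_eq_iff_index_eq)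
    then have "xs ! ((i + 1) mod ?n) = xs ! i'" using eq by (auto simp: doubleton_eq_iff)
    then have "(i + 1) mod ?n = i'" using d(1) i'n n0 by (simp add: nth_eq_iff_index_eq)
    then show False using mod_ne1[OF d(2) i(1)] unfolding i'_def by simp
  qed
  have all: "\<forall>k\<in>cycle_edges xs. v \<in> k \<longrightarrow> k = A \<or> k = B"
  proof (intro ballI impI)
    fix k assume k: "k \<in> cycle_edges xs" "v \<in> k"
    obtain l where l: "l < ?n" "k = {xs ! l, xs ! ((l + 1) mod ?n)}" using k(1) unfolding cycle_edges_def by blast
    have l1: "(l + 1) mod ?n < ?n" using n0 by simp
    have "v = xs ! l \<or> v = xs ! ((l + 1) mod ?n)" using k(2) l by simp
    then show "k = A \<or> k = B"
    proof
      assume "v = xs ! l"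
      then have "l = i" using d(1) i l by (simp add: nth_eq_iff_index_eq)
      then show ?thesis unfolding A_def using l by simp
    next
      assume "v = xs ! ((l + 1) mod ?n)"
      then have li: "(l + 1) mod ?n = i" using d(1) i l1 by (simp add: nth_eq_iff_index_eq)
      have "l = i'" unfolding i'_def li[symmetric] using mod_pred_succ[OF l(1)] by simp
      then show ?thesis unfolding B_def using l by simp
    qed
  qed
  show ?thesis apply (rule exI[of _ A], rule exI[of _ B]) using AZ BZ AB vA all by simp
qed

lemma circ_at':
  assumes "is_circuit V E Z" "h \<in> Z" "v \<in> h"
  shows "\<exists>A B. A \<in> Z \<and> B \<in> Z \<and> A \<noteq> B \<and> v \<in> A \<and> v \<in> B \<and> (\<forall>k\<in>Z. v \<in> k \<longrightarrow> k = A \<or> k = B)"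
proof -
  obtain xs where "distinct xs" "length xs \<ge> 3" "Z = cycle_edges xs" using assms(1) unfolding is_circuit_def by blast
  then show ?thesis using circ_at[of xs h v] assms(2,3) by simp
qed

lemma local_step:
  assumes c1: "\<exists>A B. A \<in> Z1 \<and> B \<in> Z1 \<and> A \<noteq> B \<and> v \<in> A \<and> v \<in> B \<and> (\<forall>k\<in>Z1. v \<in> k \<longrightarrow> k = A \<or> k = B)"
    and c2: "\<exists>A B. A \<in> Z2 \<and> B \<in> Z2 \<and> A \<noteq> B \<and> v \<in> A \<and> v \<in> B \<and> (\<forall>k\<in>Z2. v \<in> k \<longrightarrow> k = A \<or> k = B)"
    and c3: "\<exists>A B. A \<in> Z3 \<and> B \<in> Z3 \<and> A \<noteq> B \<and> v \<in> A \<and> v \<in> B \<and> (\<forall>k\<in>Z3. v \<in> k \<longrightarrow> k = A \<or> k = B)"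
    and cov: "Z1 \<subseteq> Z2 \<union> Z3" "Z2 \<subseteq> Z1 \<union> Z3" "Z3 \<subseteq> Z1 \<union> Z2"
    and h: "h \<in> Z1" "h \<in> Z2" "h \<in> Z3" "v \<in> h" and h': "h' \<in> Z1" "v \<in> h'" "h' \<noteq> h"
  shows "h' \<in> Z2 \<and> h' \<in> Z3"
proof -
  obtain A1 B1 where AB1: "\<forall>k\<in>Z1. v \<in> k \<longrightarrow> k = A1 \<or> k = B1" using c1 by blast
  obtain A2 B2 where AB2: "A2 \<in> Z2" "B2 \<in> Z2" "A2 \<noteq> B2" "v \<in> A2" "v \<in> B2" "\<forall>k\<in>Z2. v \<in> k \<longrightarrow> k = A2 \<or> k = B2" using c2 by blast
  obtain A3 B3 where AB3: "A3 \<in> Z3" "B3 \<in> Z3" "A3 \<noteq> B3" "v \<in> A3" "v \<in> B3" "\<forall>k\<in>Z3. v \<in> k \<longrightarrow> k = A3 \<or> k = B3" using c3 by blast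
  have at2: "\<And>k1 k2 k3. k1 \<in> Z1 \<Longrightarrow> k2 \<in> Z1 \<Longrightarrow> k3 \<in> Z1 \<Longrightarrow> v \<in> k1 \<Longrightarrow> v \<in> k2 \<Longrightarrow> v \<in> k3 \<Longrightarrow> k1 = k2 \<or> k1 = k3 \<or> k2 = k3"
    using AB1 by blast
  have at2b: "\<And>k1 k2 k3. k1 \<in> Z2 \<Longrightarrow> k2 \<in> Z2 \<Longrightarrow> k3 \<in> Z2 \<Longrightarrow> v \<in> k1 \<Longrightarrow> v \<in> k2 \<Longrightarrow> v \<in> k3 \<Longrightarrow> k1 = k2 \<or> k1 = k3 \<or> k2 = k3"
    using AB2(6) by blast
  have at2c: "\<And>k1 k2 k3. k1 \<in> Z3 \<Longrightarrow> k2 \<in> Z3 \<Longrightarrow> k3 \<in> Z3 \<Longrightarrow> v \<in> k1 \<Longrightarrow> v \<in> k2 \<Longrightarrow> v \<in> k3 \<Longrightarrow> k1 = k2 \<or> k1 = k3 \<or> k2 = k3"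
    using AB3(6) by blast
  have "\<exists>h2. h2 \<in> Z2 \<and> v \<in> h2 \<and> h2 \<noteq> h"
  proof (cases "A2 = h")
    case True then show ?thesis using AB2 by (intro exI[of _ B2]) auto
  next
    case False then show ?thesis using AB2 by (intro exI[of _ A2]) auto
  qed
  then obtain h2 where h2: "h2 \<in> Z2" "v \<in> h2" "h2 \<noteq> h" by blast
  have "\<exists>h3. h3 \<in> Z3 \<and> v \<in> h3 \<and> h3 \<noteq> h"
  proof (cases "A3 = h")
    case True then show ?thesis using AB3 by (intro exI[of _ B3]) auto
  next
    case False then show ?thesis using AB3 by (intro exI[of _ A3]) auto
  qed
  then obtain h3 where h3: "h3 \<in> Z3" "v \<in> h3" "h3 \<noteq> h" by blast
  have "h' \<in> Z2 \<union> Z3" using cov h' by blast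
  then show ?thesis
  proof
    assume a: "h' \<in> Z2"
    have "h3 \<in> Z1 \<union> Z2" using cov h3 by blast
    then have "h3 = h'"
    proof
      assume "h3 \<in> Z1" then show ?thesis using at2[of h h' h3] h h' h3 by auto
    next
      assume "h3 \<in> Z2" then show ?thesis using at2b[of h h' h3] h h' h3 a by auto
    qed
    then show ?thesis using a h3 by simp
  next
    assume a: "h' \<in> Z3"
    have "h2 \<in> Z1 \<union> Z3" using cov h2 by blast
    then have "h2 = h'"
    proof
      assume "h2 \<in> Z1" then show ?thesis using at2[of h h' h2] h h' h2 by auto
    next
      assume "h2 \<in> Z3" then show ?thesis using at2c[of h h' h2] h h' h2 a by auto
    qed
    then show ?thesis using a h2 by simp
  qed
qed

lemma three_circ_sub:
  assumes Z: "is_circuit V E Z1" "is_circuit V E Z2" "is_circuit V E Z3"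
    and cov: "Z1 \<subseteq> Z2 \<union> Z3" "Z2 \<subseteq> Z1 \<union> Z3" "Z3 \<subseteq> Z1 \<union> Z2"
    and g: "g \<in> Z1" "g \<in> Z2" "g \<in> Z3"
  shows "Z1 \<subseteq> Z2"
proof -
  obtain xs where xs: "distinct xs" "length xs \<ge> 3" "Z1 = cycle_edges xs" using Z(1) unfolding is_circuit_def by blast
  let ?n = "length xs"
  have n0: "?n > 0" using xs(2) by linarith
  obtain i0 where i0: "i0 < ?n" "g = {xs ! i0, xs ! ((i0 + 1) mod ?n)}" using g(1) xs(3) unfolding cycle_edges_def by blast
  define F where "F = (\<lambda>k. {xs ! ((i0 + k) mod ?n), xs ! ((i0 + k + 1) mod ?n)})"
  have FZ: "\<And>k. F k \<in> Z1"
  proof -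
    fix k
    have "(i0 + k) mod ?n < ?n" using n0 by simp
    moreover have "((i0 + k) mod ?n + 1) mod ?n = (i0 + k + 1) mod ?n" by (metis mod_add_left_eq)
    ultimately show "F k \<in> Z1" unfolding F_def xs(3) cycle_edges_def by (metis (mono_tags, lifting) mem_Collect_eq)
  qed
  have step: "\<And>k. F k \<in> Z2 \<and> F k \<in> Z3"
  proof -
    fix k show "F k \<in> Z2 \<and> F k \<in> Z3"
    proof (induction k)
      case 0
      then show ?case using g i0 unfolding F_def by simp
    next
      case (Suc k)
      let ?v = "xs ! ((i0 + k + 1) mod ?n)"
      have vk: "?v \<in> F k" unfolding F_def by simp
      have vk1: "?v \<in> F (Suc k)" unfolding F_def by simp
      have ne: "F (Suc k) \<noteq> F k"
      proof
        assume eq: "F (Suc k) = F k"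
        have a1: "(i0 + k) mod ?n < ?n" "(i0 + k + 1) mod ?n < ?n" "(i0 + k + 2) mod ?n < ?n" using n0 by simp_all
        have "(i0 + k) mod ?n \<noteq> (i0 + k + 1) mod ?n" using mod_ne0[OF xs(2)] by simp
        then have d1: "xs ! ((i0 + k) mod ?n) \<noteq> ?v" using xs(1) a1 by (simp add: nth_eq_iff_index_eq)
        have "F (Suc k) = {?v, xs ! ((i0 + k + 2) mod ?n)}" unfolding F_def by (simp add: add.assoc)
        then have "xs ! ((i0 + k) mod ?n) = xs ! ((i0 + k + 2) mod ?n)"
          using eq d1 unfolding F_def by (auto simp: doubleton_eq_iff)
        then have "(i0 + k) mod ?n = (i0 + k + 2) mod ?n" using xs(1) a1 by (simp add: nth_eq_iff_index_eq)
        then show False using mod_ne2[OF xs(2)] by simp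
      qed
      have "?v \<in> F k" by (rule vk)
      have c1: "\<exists>A B. A \<in> Z1 \<and> B \<in> Z1 \<and> A \<noteq> B \<and> ?v \<in> A \<and> ?v \<in> B \<and> (\<forall>k\<in>Z1. ?v \<in> k \<longrightarrow> k = A \<or> k = B)"
        using circ_at'[OF Z(1) FZ[of k] vk] .
      have c2: "\<exists>A B. A \<in> Z2 \<and> B \<in> Z2 \<and> A \<noteq> B \<and> ?v \<in> A \<and> ?v \<in> B \<and> (\<forall>k\<in>Z2. ?v \<in> k \<longrightarrow> k = A \<or> k = B)"
        using circ_at'[OF Z(2) _ vk] Suc.IH by blast
      have c3: "\<exists>A B. A \<in> Z3 \<and> B \<in> Z3 \<and> A \<noteq> B \<and> ?v \<in> A \<and> ?v \<in> B \<and> (\<forall>k\<in>Z3. ?v \<in> k \<longrightarrow> k = A \<or> k = B)"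
        using circ_at'[OF Z(3) _ vk] Suc.IH by blast
      show ?case using local_step[OF c1 c2 c3 cov FZ[of k] _ _ vk FZ[of "Suc k"] vk1 ne] Suc.IH by blast
    qed
  qed
  show ?thesis
  proof
    fix e assume "e \<in> Z1"
    then obtain i where i: "i < ?n" "e = {xs ! i, xs ! ((i + 1) mod ?n)}" using xs(3) unfolding cycle_edges_def by blast
    define k where "k = ?n - i0 + i"
    have "(i0 + k) mod ?n = i" unfolding k_def using i i0 by simp
    moreover have "(i0 + k + 1) mod ?n = (i + 1) mod ?n"
      using \<open>(i0 + k) mod ?n = i\<close> by (metis mod_add_left_eq)
    ultimately have "F k = e" unfolding F_def using i by simp
    then show "e \<in> Z2" using step by blast
  qed
qed

lemma three_circ_eq:
  assumes Z: "is_circuit V E Z1" "is_circuit V E Z2" "is_circuit V E Z3"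
    and cov: "Z1 \<subseteq> Z2 \<union> Z3" "Z2 \<subseteq> Z1 \<union> Z3" "Z3 \<subseteq> Z1 \<union> Z2"
    and g: "g \<in> Z1" "g \<in> Z2" "g \<in> Z3"
  shows "Z1 = Z2 \<and> Z1 = Z3"
proof -
  have "Z1 \<subseteq> Z2" using three_circ_sub[OF Z cov g] .
  moreover have "Z2 \<subseteq> Z1" using three_circ_sub[OF Z(2,1,3) cov(2,1) _ g(2,1,3)] cov(3) by blast
  moreover have "Z1 \<subseteq> Z3" using three_circ_sub[OF Z(1,3,2) _ _ _ g(1,3,2)] cov by blast
  moreover have "Z3 \<subseteq> Z1" using three_circ_sub[OF Z(3,1,2) _ _ _ g(3,1,2)] cov by blast
  ultimately show ?thesis by blast
qed

lemma circuit_split: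
  assumes d: "distinct xs" "length xs \<ge> 3" "cycle_edges xs \<subseteq> E" and cd: "c \<in> set xs" "d \<in> set xs" "c \<noteq> d"
  shows "\<exists>p q. circ2 E p q \<and> hd p = c \<and> last p = d \<and> pe p \<union> pe q = cycle_edges xs \<and> set p \<union> set q = set xs"
proof -
  have ne: "xs \<noteq> []" using cd by auto
  obtain i where i: "i < length xs" "xs ! i = c" using cd(1) by (meson in_set_conv_nth)
  define ys where "ys = rotate i xs"
  have ys: "distinct ys" "length ys \<ge> 3" "cycle_edges ys \<subseteq> E" "set ys = set xs"
    unfolding ys_def using d cycle_edges_rotate[OF ne] by auto
  have y0: "ys ! 0 = c" unfolding ys_def using i ne by (simp add: nth_rotate)
  obtain j where j: "j < length ys" "ys ! j = d" using cd(2) ys(4) by (metis in_set_conv_nth)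
  have "j \<noteq> 0"
  proof
    assume "j = 0"
    then have "d = c" using j y0 by simp
    then show False using cd(3) by simp
  qed
  then have "0 < j" by simp
  note s = split_circ0[OF ys(1-3) this j(1)]
  have "cycle_edges ys = cycle_edges xs" unfolding ys_def using cycle_edges_rotate[OF ne] .
  then show ?thesis using s y0 j ys(4) by metis
qed

lemma theta_img:
  assumes G: "graph V E" and cs: "\<forall>C. is_circuit V E C \<longrightarrow> is_circuit V' E' (f ` C)"
    and c: "circ2 E p1 p2" "circ2 E p1 p3" "circ2 E p2 p3"
    and g: "g \<in> f ` pe p1" "g \<in> f ` pe p2"
  shows "f ` pe p1 \<union> f ` pe p3 = f ` pe p1 \<union> f ` pe p2 \<and> f ` pe p2 \<union> f ` pe p3 = f ` pe p1 \<union> f ` pe p2"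
proof -
  have Z: "is_circuit V' E' (f ` pe p1 \<union> f ` pe p2)" "is_circuit V' E' (f ` pe p1 \<union> f ` pe p3)"
    "is_circuit V' E' (f ` pe p2 \<union> f ` pe p3)"
  proof -
    have "\<And>p q. circ2 E p q \<Longrightarrow> is_circuit V' E' (f ` pe p \<union> f ` pe q)"
    proof -
      fix p q assume "circ2 E p q"
      then have "is_circuit V E (pe p \<union> pe q)" by (rule two_paths_circuit[OF G])
      then have "is_circuit V' E' (f ` (pe p \<union> pe q))" using cs by blast
      then show "is_circuit V' E' (f ` pe p \<union> f ` pe q)" by (simp only: image_Un)
    qed
    then show "is_circuit V' E' (f ` pe p1 \<union> f ` pe p2)" "is_circuit V' E' (f ` pe p1 \<union> f ` pe p3)"
      "is_circuit V' E' (f ` pe p2 \<union> f ` pe p3)" using c by blast+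
  qed
  have "f ` pe p1 \<union> f ` pe p2 = f ` pe p1 \<union> f ` pe p3 \<and> f ` pe p1 \<union> f ` pe p2 = f ` pe p2 \<union> f ` pe p3"
  proof (rule three_circ_eq[OF Z, of g])
    show "g \<in> f ` pe p1 \<union> f ` pe p2" "g \<in> f ` pe p1 \<union> f ` pe p3" "g \<in> f ` pe p2 \<union> f ` pe p3"
      using g by blast+
  qed auto
  then show ?thesis by (elim conjE) (rule conjI; rule sym; assumption)
qed

lemma theta_disj:
  assumes G: "graph V E" and cs: "\<forall>C. is_circuit V E C \<longrightarrow> is_circuit V' E' (f ` C)"
    and c: "circ2 E p1 p2" "circ2 E p1 p3" "circ2 E p2 p3"
    and K: "f ` pe p1 \<union> f ` pe p2 = K" and bad: "\<not> f ` pe p3 \<subseteq> K"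
  shows "f ` pe p1 \<inter> f ` pe p2 = {}"
proof (rule ccontr)
  assume "f ` pe p1 \<inter> f ` pe p2 \<noteq> {}"
  then obtain g where g: "g \<in> f ` pe p1" "g \<in> f ` pe p2" by blast
  have "f ` pe p1 \<union> f ` pe p3 = f ` pe p1 \<union> f ` pe p2" using theta_img[OF G cs c g] by (elim conjE)
  then have "f ` pe p1 \<union> f ` pe p3 = K" using K by simp
  then show False using bad by blast
qed

lemma circ2_rev: "circ2 E p q \<Longrightarrow> circ2 E (rev p) (rev q)"
proof -
  assume c: "circ2 E p q"
  then have ne: "p \<noteq> []" "q \<noteq> []" unfolding circ2_def path_def by auto
  show ?thesis using c path_rev ne unfolding circ2_def by (auto simp: hd_rev last_rev insert_commute)
qed

definition thetaK :: "'a set set \<Rightarrow> ('a set \<Rightarrow> 'b) \<Rightarrow> 'b set \<Rightarrow> 'a \<Rightarrow> 'a \<Rightarrow> 'a list \<Rightarrow> 'a list \<Rightarrow> 'a list \<Rightarrow> bool" where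
  "thetaK E f K a b r1 r2 r3 \<longleftrightarrow> circ2 E r1 r2 \<and> circ2 E r1 r3 \<and> circ2 E r2 r3 \<and> hd r1 = a \<and> last r1 = b
     \<and> f ` pe r1 \<union> f ` pe r2 = K \<and> f ` pe r1 \<union> f ` pe r3 = K \<and> f ` pe r2 \<union> f ` pe r3 = K"

lemma thetaK_swap12: "thetaK E f K a b r1 r2 r3 \<Longrightarrow> thetaK E f K a b r2 r1 r3"
  unfolding thetaK_def circ2_def by (auto simp: Int_commute Un_commute)

lemma thetaK_swap23: "thetaK E f K a b r1 r2 r3 \<Longrightarrow> thetaK E f K a b r1 r3 r2"
  unfolding thetaK_def circ2_def by (auto simp: Int_commute Un_commute)

lemma thetaK_swap13: "thetaK E f K a b r1 r2 r3 \<Longrightarrow> thetaK E f K a b r3 r2 r1"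
  unfolding thetaK_def circ2_def by (auto simp: Int_commute Un_commute)

lemma thetaK_rev: "thetaK E f K a b r1 r2 r3 \<Longrightarrow> thetaK E f K b a (rev r1) (rev r2) (rev r3)"
proof -
  assume t: "thetaK E f K a b r1 r2 r3"
  then have c: "circ2 E r1 r2" "circ2 E r1 r3" "circ2 E r2 r3" unfolding thetaK_def by auto
  then have ne: "r1 \<noteq> []" unfolding circ2_def path_def by auto
  show ?thesis using t circ2_rev[OF c(1)] circ2_rev[OF c(2)] circ2_rev[OF c(3)] ne
    unfolding thetaK_def by (simp add: pe_rev hd_rev last_rev)
qed

lemma thetaK_facts:
  assumes "thetaK E f K a b r1 r2 r3"
  shows "path E r1" "path E r2" "path E r3" "hd r1 = a" "hd r2 = a" "hd r3 = a"
    "last r1 = b" "last r2 = b" "last r3 = b" "a \<noteq> b"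
    "set r1 \<inter> set r2 = {a, b}" "set r1 \<inter> set r3 = {a, b}" "set r2 \<inter> set r3 = {a, b}"
    "f ` pe r1 \<union> f ` pe r2 = K" "f ` pe r1 \<union> f ` pe r3 = K" "f ` pe r2 \<union> f ` pe r3 = K"
    "circ2 E r1 r2" "circ2 E r1 r3" "circ2 E r2 r3"
  using assms unfolding thetaK_def circ2_def by auto

lemma set_join_eq: "p \<noteq> [] \<Longrightarrow> r \<noteq> [] \<Longrightarrow> last p = hd r \<Longrightarrow> set (p @ tl r) = set p \<union> set r"
  by (cases r) auto

lemma len_join: "r \<noteq> [] \<Longrightarrow> length (p @ tl r) = length p + length r - 1"
  by (cases r) auto

lemma len_ge2: "p \<noteq> [] \<Longrightarrow> hd p \<noteq> last p \<Longrightarrow> length p \<ge> 2"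
  by (cases p rule: pe.cases) auto

lemma len2_eq: "length p = 2 \<Longrightarrow> length q = 2 \<Longrightarrow> hd p = hd q \<Longrightarrow> last p = last q \<Longrightarrow> p = q"
  using len2_path by metis

lemma ear_W_eq: "ear E W R \<Longrightarrow> W = W' \<Longrightarrow> ear E W' R"
  by simp

lemma coreA:
  assumes G: "graph V E" and cs: "\<forall>C. is_circuit V E C \<longrightarrow> is_circuit V' E' (f ` C)"
    and T: "thetaK E f K a b r1 r2 r3"
    and R: "ear E (set r1 \<union> set r2 \<union> set r3) R" and bad: "\<not> f ` pe R \<subseteq> K"
    and ij: "hd R = r1 ! i" "last R = r1 ! j" "i < j" "j < length r1"
  shows "f ` pe (drop i (take (Suc j) r1)) \<inter> f ` pe r2 = {}"
proof -
  note F = thetaK_facts[OF T]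
  note s = split3[OF F(1) ij(3,4)]
  define m1 where "m1 = take (Suc i) r1"
  define sg where "sg = drop i (take (Suc j) r1)"
  define m2 where "m2 = drop j r1"
  define c where "c = r1 ! i"
  define d where "d = r1 ! j"
  have pm1: "path E m1" and psg: "path E sg" and pm2: "path E m2" using s(1-3) unfolding m1_def sg_def m2_def .
  have hm1: "hd m1 = a" "last m1 = c" using s(4,5) F(4) unfolding m1_def c_def by auto
  have hsg: "hd sg = c" "last sg = d" using s(6,7) unfolding sg_def c_def d_def by auto
  have hm2: "hd m2 = d" "last m2 = b" using s(8,9) F(7) unfolding m2_def d_def by auto
  have i1: "set m1 \<inter> set sg = {c}" "set sg \<inter> set m2 = {d}" "set m1 \<inter> set m2 = {}"
    using s(10-12) unfolding m1_def sg_def m2_def c_def d_def by auto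
  have u1: "set r1 = set m1 \<union> set sg \<union> set m2" using s(13) unfolding m1_def sg_def m2_def .
  have pu1: "pe r1 = pe m1 \<union> pe sg \<union> pe m2" using s(14) unfolding m1_def sg_def m2_def .
  have ne: "m1 \<noteq> []" "sg \<noteq> []" "m2 \<noteq> []" "r2 \<noteq> []" "R \<noteq> []"
    using pm1 psg pm2 F(2) ear_ne[OF R] path_ne by blast+
  have a1: "a \<in> set m1" using hm1 ne(1) hd_in_set by metis
  have b2: "b \<in> set m2" using hm2 ne(3) last_in_set by metis
  have cin: "c \<in> set sg" "d \<in> set sg" using hsg ne(2) hd_in_set last_in_set by metis+
  have dr1: "distinct r1" using F(1) unfolding path_def by blast
  have cd: "c \<noteq> d" unfolding c_def d_def using nth_eq_iff_index_eq[OF dr1] ij by auto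
  have RX: "\<And>v. v \<in> set R \<Longrightarrow> v \<in> set r1 \<union> set r2 \<union> set r3 \<Longrightarrow> v = c \<or> v = d"
    using ear_inter[OF R] ij unfolding c_def d_def by blast
  have hR: "hd R = c" "last R = d" using ij unfolding c_def d_def by auto
  have cR: "c \<in> set R" "d \<in> set R" using hR ne(5) hd_in_set last_in_set by metis+
  have m1r2: "set m1 \<inter> set r2 = {a}"
  proof
    show "set m1 \<inter> set r2 \<subseteq> {a}"
    proof
      fix v assume v: "v \<in> set m1 \<inter> set r2"
      then have "v \<in> set r1 \<inter> set r2" using u1 by blast
      then have "v = a \<or> v = b" using F(11) by blast
      moreover have "v \<noteq> b" using v b2 i1(3) by blast
      ultimately show "v \<in> {a}" by simp
    qed
    show "{a} \<subseteq> set m1 \<inter> set r2" using a1 F(5) ne(4) hd_in_set by (metis Int_iff empty_subsetI insert_subset)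
  qed
  define rh1 where "rh1 = rev m1 @ tl r2"
  have lrm1: "last (rev m1) = hd r2" using hm1 F(5) ne(1) by (simp add: last_rev)
  have prh1: "path E rh1" unfolding rh1_def
    using path_join[OF path_rev[OF pm1] F(2) lrm1] m1r2 F(5) by simp
  have srh1: "set rh1 = set m1 \<union> set r2" unfolding rh1_def using set_join_eq[of "rev m1" r2] ne lrm1 by simp
  have hrh1: "hd rh1 = c" "last rh1 = b" unfolding rh1_def using hm1 ne last_join[of "rev m1" r2] lrm1 F(8)
    by (auto simp: hd_rev)
  have perh1: "pe rh1 = pe m1 \<union> pe r2" unfolding rh1_def using pe_join[of "rev m1" r2] ne lrm1 by (simp add: pe_rev)
  have lenrh1: "length rh1 = length m1 + length r2 - 1" unfolding rh1_def using len_join[OF ne(4)] by simp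
  have i2: "set rh1 \<inter> set (rev m2) = {hd (rev m2)}"
  proof
    have hr: "hd (rev m2) = b" using hm2 ne(3) by (simp add: hd_rev)
    show "set rh1 \<inter> set (rev m2) \<subseteq> {hd (rev m2)}"
    proof
      fix v assume v: "v \<in> set rh1 \<inter> set (rev m2)"
      then have v2: "v \<in> set m2" by simp
      then have "v \<notin> set m1" using i1(3) by blast
      then have "v \<in> set r2" using v srh1 by blast
      then have "v \<in> set r1 \<inter> set r2" using v2 u1 by blast
      then have "v = a \<or> v = b" using F(11) by blast
      moreover have "v \<noteq> a" using v2 a1 i1(3) by blast
      ultimately show "v \<in> {hd (rev m2)}" using hr by simp
    qed
    show "{hd (rev m2)} \<subseteq> set rh1 \<inter> set (rev m2)"
      using hr b2 srh1 F(8) ne(4) last_in_set by fastforce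
  qed
  define rh where "rh = rh1 @ tl (rev m2)"
  have lrh1: "last rh1 = hd (rev m2)" using hrh1 hm2 ne(3) by (simp add: hd_rev)
  have rm2ne: "rev m2 \<noteq> []" using ne(3) by simp
  have rh1ne: "rh1 \<noteq> []" using prh1 path_ne by blast
  have prh: "path E rh" unfolding rh_def using path_join[OF prh1 path_rev[OF pm2] lrh1 i2] .
  have srh: "set rh = set m1 \<union> set r2 \<union> set m2" unfolding rh_def using set_join_eq[OF rh1ne rm2ne lrh1] srh1 by simp
  have hrh: "hd rh = c" "last rh = d" unfolding rh_def using hrh1 rh1ne last_join[OF rh1ne rm2ne lrh1] hm2 ne(3)
    by (auto simp: last_rev)
  have perh: "pe rh = pe m1 \<union> pe r2 \<union> pe m2" unfolding rh_def using pe_join[OF rh1ne rm2ne lrh1] perh1 by (simp add: pe_rev)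
  have lenrh: "length rh = length m1 + length r2 + length m2 - 2"
  proof -
    have "length rh = length rh1 + length m2 - 1" unfolding rh_def using len_join[OF rm2ne] by simp
    moreover have "length m1 > 0" "length r2 > 0" "length m2 > 0" using ne by auto
    ultimately show ?thesis using lenrh1 by linarith
  qed
  have lens: "length m1 = Suc i" "length sg = Suc j - i" "length m2 = length r1 - j"
    unfolding m1_def sg_def m2_def using ij by auto
  have c12: "circ2 E sg rh"
  proof -
    have "set sg \<inter> set rh = {c, d}"
    proof
      show "set sg \<inter> set rh \<subseteq> {c, d}"
      proof
        fix v assume v: "v \<in> set sg \<inter> set rh"
        then have "v \<in> set m1 \<or> v \<in> set r2 \<or> v \<in> set m2" using srh by blast
        then show "v \<in> {c, d}"
        proof (elim disjE)
          assume "v \<in> set m1" then show ?thesis using v i1(1) by blast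
        next
          assume "v \<in> set m2" then show ?thesis using v i1(2) by blast
        next
          assume "v \<in> set r2"
          then have "v \<in> set r1 \<inter> set r2" using v u1 by blast
          then have "v = a \<or> v = b" using F(11) by blast
          then show ?thesis using v a1 b2 i1(1,2) by blast
        qed
      qed
      show "{c, d} \<subseteq> set sg \<inter> set rh"
        using cin hrh prh path_ne hd_in_set last_in_set by (metis Int_iff empty_subsetI insert_subset)
    qed
    moreover have "length sg + length rh \<ge> 5"
    proof -
      have "length r1 + length r2 \<ge> 5" using F(17) unfolding circ2_def by blast
      then show ?thesis using lens lenrh ij by simp
    qed
    ultimately show ?thesis unfolding circ2_def using psg prh hsg hrh cd by simp
  qed
  have c13: "circ2 E sg R"
  proof -
    have "set sg \<inter> set R = {c, d}"
    proof
      show "set sg \<inter> set R \<subseteq> {c, d}" using RX u1 by blast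
      show "{c, d} \<subseteq> set sg \<inter> set R" using cin cR by blast
    qed
    moreover have "length sg + length R \<ge> 5"
    proof (rule ccontr)
      assume "\<not> ?thesis"
      moreover have "length sg \<ge> 2" "length R \<ge> 2" using len_ge2 ne(2,5) hsg hR cd by metis+
      ultimately have "length sg = 2" "length R = 2" by auto
      then have "sg = R" using len2_eq hsg hR by metis
      then have "f ` pe R \<subseteq> K" using pu1 F(14) by blast
      then show False using bad by blast
    qed
    ultimately show ?thesis unfolding circ2_def using psg ear_path[OF R] hsg hR cd by simp
  qed
  have c23: "circ2 E rh R"
  proof -
    have "set rh \<inter> set R = {c, d}"
    proof
      show "set rh \<inter> set R \<subseteq> {c, d}" using RX u1 srh by blast
      show "{c, d} \<subseteq> set rh \<inter> set R" using cR hrh prh path_ne hd_in_set last_in_set by (metis Int_iff empty_subsetI insert_subset)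
    qed
    moreover have "length rh + length R \<ge> 5"
    proof (rule ccontr)
      assume "\<not> ?thesis"
      moreover have "length rh \<ge> 2" "length R \<ge> 2" using len_ge2 prh path_ne ne(5) hrh hR cd by metis+
      ultimately have "length rh = 2" "length R = 2" by auto
      then have "rh = R" using len2_eq hrh hR by metis
      then have "f ` pe R \<subseteq> K" using pu1 perh F(14) by blast
      then show False using bad by blast
    qed
    ultimately show ?thesis unfolding circ2_def using prh ear_path[OF R] hrh hR cd by simp
  qed
  have K12: "f ` pe sg \<union> f ` pe rh = K"
  proof -
    have "pe sg \<union> pe rh = pe r1 \<union> pe r2" using pu1 perh by blast
    then have "f ` pe sg \<union> f ` pe rh = f ` pe r1 \<union> f ` pe r2" by (metis image_Un)
    then show ?thesis using F(14) by simp
  qed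
  have "f ` pe sg \<inter> f ` pe rh = {}" using theta_disj[OF G cs c12 c13 c23 K12 bad] .
  moreover have "pe r2 \<subseteq> pe rh" using perh by blast
  ultimately show ?thesis unfolding sg_def by blast
qed

lemma sub_disj: "X \<subseteq> A \<union> B \<Longrightarrow> X \<inter> A = {} \<Longrightarrow> X \<inter> B = {} \<Longrightarrow> X = {}"
  by blast

lemma caseA_ord:
  assumes G: "graph V E" and cs: "\<forall>C. is_circuit V E C \<longrightarrow> is_circuit V' E' (f ` C)"
    and T: "thetaK E f K a b r1 r2 r3"
    and R: "ear E (set r1 \<union> set r2 \<union> set r3) R" and bad: "\<not> f ` pe R \<subseteq> K"
    and ij: "hd R = r1 ! i" "last R = r1 ! j" "i < j" "j < length r1"
  shows False
proof -
  note F = thetaK_facts[OF T]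
  have d2: "f ` pe (drop i (take (Suc j) r1)) \<inter> f ` pe r2 = {}" using coreA[OF G cs T R bad ij] .
  have T': "thetaK E f K a b r1 r3 r2" using thetaK_swap23[OF T] .
  have Weq: "set r1 \<union> set r2 \<union> set r3 = set r1 \<union> set r3 \<union> set r2" by blast
  have R': "ear E (set r1 \<union> set r3 \<union> set r2) R" using ear_W_eq[OF R Weq] .
  have d3: "f ` pe (drop i (take (Suc j) r1)) \<inter> f ` pe r3 = {}" using coreA[OF G cs T' R' bad ij] .
  have "pe (drop i (take (Suc j) r1)) \<subseteq> pe r1" using pe_drop[of i "take (Suc j) r1"] pe_take[of "Suc j" r1] by blast
  then have "f ` pe (drop i (take (Suc j) r1)) \<subseteq> f ` pe r1" by (rule image_mono)
  also have "\<dots> \<subseteq> K" using F(14) Un_upper1 by metis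
  also have "\<dots> = f ` pe r2 \<union> f ` pe r3" using F(16) by simp
  finally have "f ` pe (drop i (take (Suc j) r1)) \<subseteq> f ` pe r2 \<union> f ` pe r3" .
  then have "f ` pe (drop i (take (Suc j) r1)) = {}" using sub_disj d2 d3 by metis
  then have "pe (drop i (take (Suc j) r1)) = {}" by simp
  moreover have "length (drop i (take (Suc j) r1)) \<ge> 2" using ij by simp
  ultimately show False using pe_ne by blast
qed

lemma caseA:
  assumes G: "graph V E" and cs: "\<forall>C. is_circuit V E C \<longrightarrow> is_circuit V' E' (f ` C)"
    and T: "thetaK E f K a b r1 r2 r3"
    and R: "ear E (set r1 \<union> set r2 \<union> set r3) R" and bad: "\<not> f ` pe R \<subseteq> K"
    and cd: "hd R \<in> set r1" "last R \<in> set r1"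
  shows False
proof -
  obtain i where i: "i < length r1" "r1 ! i = hd R" using cd(1) by (meson in_set_conv_nth)
  obtain j where j: "j < length r1" "r1 ! j = last R" using cd(2) by (meson in_set_conv_nth)
  have "i \<noteq> j" using i j ear_ends[OF R] by auto
  then show False
  proof (cases "i < j")
    case True
    show False using caseA_ord[OF G cs T R bad i(2)[symmetric] j(2)[symmetric] True j(1)] .
  next
    case False
    then have ji: "j < i" using \<open>i \<noteq> j\<close> by simp
    have Rr: "ear E (set r1 \<union> set r2 \<union> set r3) (rev R)" using ear_rev[OF R] .
    have ne: "R \<noteq> []" using ear_ne[OF R] .
    have "hd (rev R) = r1 ! j" "last (rev R) = r1 ! i" using i j ne by (simp_all add: hd_rev last_rev)
    moreover have "\<not> f ` pe (rev R) \<subseteq> K" using bad by (simp add: pe_rev)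
    ultimately show False using caseA_ord[OF G cs T Rr] ji i(1) by blast
  qed
qed

lemma nth_inj: "distinct xs \<Longrightarrow> i < length xs \<Longrightarrow> k < length xs \<Longrightarrow> xs ! i = xs ! k \<Longrightarrow> i = k"
  using nth_eq_iff_index_eq by blast

lemma disj_mono: "A \<inter> B = {} \<Longrightarrow> C \<subseteq> B \<Longrightarrow> A \<inter> C = {}"
  by blast

lemma coreB:
  assumes G: "graph V E" and cs: "\<forall>C. is_circuit V E C \<longrightarrow> is_circuit V' E' (f ` C)"
    and T: "thetaK E f K a b r1 r2 r3"
    and R: "ear E (set r1 \<union> set r2 \<union> set r3) R" and bad: "\<not> f ` pe R \<subseteq> K"
    and ci: "hd R = r1 ! i" "0 < i" "Suc i < length r1"
    and dj: "last R = r2 ! j" "0 < j" "Suc j < length r2"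
  shows "f ` pe (take (Suc j) r2) \<inter> f ` pe r3 = {}"
proof -
  note F = thetaK_facts[OF T]
  have il: "i < length r1" using ci by simp
  have jl: "j < length r2" using dj by simp
  note s1 = split2[OF F(1) il]
  note s2 = split2[OF F(2) jl]
  define al where "al = take (Suc i) r1"
  define be where "be = drop i r1"
  define ga where "ga = take (Suc j) r2"
  define de where "de = drop j r2"
  define c where "c = r1 ! i"
  define d where "d = r2 ! j"
  have pal: "path E al" "hd al = a" "last al = c" using s1(1,3,4) F(4) unfolding al_def c_def by auto
  have pbe: "path E be" "hd be = c" "last be = b" using s1(2,5,6) F(7) unfolding be_def c_def by auto
  have pga: "path E ga" "hd ga = a" "last ga = d" using s2(1,3,4) F(5) unfolding ga_def d_def by auto
  have pde: "path E de" "hd de = d" "last de = b" using s2(2,5,6) F(8) unfolding de_def d_def by auto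
  have iab: "set al \<inter> set be = {c}" "set al \<union> set be = set r1" using s1(7,8) unfolding al_def be_def c_def by auto
  have igd: "set ga \<inter> set de = {d}" "set ga \<union> set de = set r2" using s2(7,8) unfolding ga_def de_def d_def by auto
  have pegd: "pe ga \<union> pe de = pe r2" using s2(9) unfolding ga_def de_def .
  have ne: "al \<noteq> []" "be \<noteq> []" "ga \<noteq> []" "de \<noteq> []" "R \<noteq> []" "r3 \<noteq> []"
    using pal(1) pbe(1) pga(1) pde(1) ear_ne[OF R] F(3) path_ne by blast+
  have dr1: "distinct r1" using F(1) unfolding path_def by blast
  have dr2: "distinct r2" using F(2) unfolding path_def by blast
  have r1ne: "r1 \<noteq> []" using F(1) path_ne by blast
  have r2ne: "r2 \<noteq> []" using F(2) path_ne by blast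
  have ca: "c \<noteq> a"
  proof
    assume "c = a"
    then have "r1 ! i = r1 ! 0" unfolding c_def using F(4) r1ne by (simp add: hd_conv_nth)
    moreover have "0 < length r1" "length r1 - 1 < length r1" using il by auto
    ultimately show False using nth_inj[OF dr1 il] ci by fastforce
  qed
  have cb: "c \<noteq> b"
  proof
    assume "c = b"
    then have "r1 ! i = r1 ! (length r1 - 1)" unfolding c_def using F(7) r1ne by (simp add: last_conv_nth)
    moreover have "0 < length r1" "length r1 - 1 < length r1" using il by auto
    ultimately show False using nth_inj[OF dr1 il] ci by fastforce
  qed
  have da: "d \<noteq> a"
  proof
    assume "d = a"
    then have "r2 ! j = r2 ! 0" unfolding d_def using F(5) r2ne by (simp add: hd_conv_nth)
    moreover have "0 < length r2" "length r2 - 1 < length r2" using jl by auto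
    ultimately show False using nth_inj[OF dr2 jl] dj by fastforce
  qed
  have db: "d \<noteq> b"
  proof
    assume "d = b"
    then have "r2 ! j = r2 ! (length r2 - 1)" unfolding d_def using F(8) r2ne by (simp add: last_conv_nth)
    moreover have "0 < length r2" "length r2 - 1 < length r2" using jl by auto
    ultimately show False using nth_inj[OF dr2 jl] dj by fastforce
  qed
  have c1: "c \<in> set r1" "d \<in> set r2" unfolding c_def d_def using il jl by auto
  have cn: "c \<notin> set r2" "c \<notin> set r3" using c1 F(11,12) ca cb by blast+
  have dn: "d \<notin> set r1" "d \<notin> set r3" using c1 F(11,13) da db by blast+
  have aA: "a \<in> set al" "c \<in> set al" using pal ne(1) hd_in_set last_in_set by metis+
  have bB: "b \<in> set be" using pbe ne(2) last_in_set by metis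
  have bnA: "b \<notin> set al" using iab(1) bB cb by auto
  have aG: "a \<in> set ga" "d \<in> set ga" using pga ne(3) hd_in_set last_in_set by metis+
  have bD: "b \<in> set de" "d \<in> set de" using pde ne(4) hd_in_set last_in_set by metis+
  have anD: "a \<notin> set de" using igd(1) aG da by auto
  have bnG: "b \<notin> set ga" using igd(1) bD db by auto
  have hR: "hd R = c" "last R = d" using ci dj unfolding c_def d_def by auto
  have cR: "c \<in> set R" "d \<in> set R" using hR ne(5) hd_in_set last_in_set by metis+
  have RX: "\<And>v. v \<in> set R \<Longrightarrow> v \<in> set r1 \<union> set r2 \<union> set r3 \<Longrightarrow> v = c \<or> v = d"
    using ear_inter[OF R] hR by blast
  have a3: "a \<in> set r3" "b \<in> set r3" using F(6,9) ne(6) hd_in_set last_in_set by metis+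
  have iAR: "set al \<inter> set R = {hd R}"
  proof
    show "set al \<inter> set R \<subseteq> {hd R}"
    proof
      fix v assume v: "v \<in> set al \<inter> set R"
      then have "v \<in> set r1" using iab(2) by blast
      then have "v = c \<or> v = d" using RX v by blast
      then show "v \<in> {hd R}" using hR dn(1) \<open>v \<in> set r1\<close> by auto
    qed
    show "{hd R} \<subseteq> set al \<inter> set R" using hR aA cR by simp
  qed
  define P2 where "P2 = al @ tl R"
  have lalR: "last al = hd R" using pal hR by simp
  have pP2: "path E P2" unfolding P2_def using path_join[OF pal(1) ear_path[OF R] lalR iAR] .
  have sP2: "set P2 = set al \<union> set R" unfolding P2_def using set_join_eq[OF ne(1) ne(5) lalR] .
  have hP2: "hd P2 = a" "last P2 = d" unfolding P2_def using pal ne last_join[OF ne(1) ne(5) lalR] hR by auto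
  have peP2: "pe P2 = pe al \<union> pe R" unfolding P2_def using pe_join[OF ne(1) ne(5) lalR] .
  have lP2: "length P2 \<ge> 3"
  proof -
    have "length al \<ge> 2" using ci unfolding al_def by simp
    moreover have "length R \<ge> 2" using ear_len[OF R] .
    ultimately show ?thesis unfolding P2_def using len_join[OF ne(5), of al] by simp
  qed
  have rdne: "rev de \<noteq> []" using ne(4) by simp
  have l3: "last r3 = hd (rev de)" using F(9) pde ne(4) by (simp add: hd_rev)
  have i3D: "set r3 \<inter> set (rev de) = {hd (rev de)}"
  proof
    show "set r3 \<inter> set (rev de) \<subseteq> {hd (rev de)}"
    proof
      fix v assume v: "v \<in> set r3 \<inter> set (rev de)"
      then have "v \<in> set r2" using igd(2) by auto
      then have "v = a \<or> v = b" using F(13) v by blast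
      then show "v \<in> {hd (rev de)}" using anD v l3 F(9) by auto
    qed
    show "{hd (rev de)} \<subseteq> set r3 \<inter> set (rev de)" using l3 a3 bD F(9) by simp
  qed
  define P3 where "P3 = r3 @ tl (rev de)"
  have pP3: "path E P3" unfolding P3_def using path_join[OF F(3) path_rev[OF pde(1)] l3 i3D] .
  have sP3: "set P3 = set r3 \<union> set de" unfolding P3_def using set_join_eq[OF ne(6) rdne l3] by simp
  have hP3: "hd P3 = a" "last P3 = d" unfolding P3_def using F(6) ne(6) last_join[OF ne(6) rdne l3] pde ne(4)
    by (auto simp: last_rev)
  have peP3: "pe P3 = pe r3 \<union> pe de" unfolding P3_def using pe_join[OF ne(6) rdne l3] by (simp add: pe_rev)
  have lP3: "length P3 \<ge> 3"
  proof -
    have "length de \<ge> 2" using dj unfolding de_def by simp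
    moreover have "length r3 \<ge> 2" using len_ge2[OF ne(6)] F(6,9,10) by simp
    ultimately show ?thesis unfolding P3_def using len_join[OF rdne, of r3] by simp
  qed
  have lga: "length ga \<ge> 2" using dj unfolding ga_def by simp
  have c12: "circ2 E ga P2"
  proof -
    have "set ga \<inter> set P2 = {a, d}"
    proof
      show "set ga \<inter> set P2 \<subseteq> {a, d}"
      proof
        fix v assume v: "v \<in> set ga \<inter> set P2"
        then have vr2: "v \<in> set r2" using igd(2) by blast
        have "v \<in> set al \<or> v \<in> set R" using v sP2 by blast
        then show "v \<in> {a, d}"
        proof
          assume "v \<in> set al"
          then have "v \<in> set r1" using iab(2) by blast
          then have "v = a \<or> v = b" using vr2 F(11) by blast
          then show ?thesis using bnG v by auto
        next
          assume "v \<in> set R"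
          then have "v = c \<or> v = d" using RX vr2 by blast
          then show ?thesis using cn(1) vr2 by auto
        qed
      qed
      show "{a, d} \<subseteq> set ga \<inter> set P2" using aG aA cR sP2 by simp
    qed
    then show ?thesis unfolding circ2_def using pga pP2 hP2 da lga lP2 by simp
  qed
  have c13: "circ2 E ga P3"
  proof -
    have "set ga \<inter> set P3 = {a, d}"
    proof
      show "set ga \<inter> set P3 \<subseteq> {a, d}"
      proof
        fix v assume v: "v \<in> set ga \<inter> set P3"
        then have vr2: "v \<in> set r2" using igd(2) by blast
        have "v \<in> set r3 \<or> v \<in> set de" using v sP3 by blast
        then show "v \<in> {a, d}"
        proof
          assume "v \<in> set r3"
          then have "v = a \<or> v = b" using vr2 F(13) by blast
          then show ?thesis using bnG v by auto
        next
          assume "v \<in> set de"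
          then show ?thesis using igd(1) v by blast
        qed
      qed
      show "{a, d} \<subseteq> set ga \<inter> set P3" using aG a3 bD sP3 by simp
    qed
    then show ?thesis unfolding circ2_def using pga pP3 hP3 da lga lP3 by simp
  qed
  have c23: "circ2 E P3 P2"
  proof -
    have "set P3 \<inter> set P2 = {a, d}"
    proof
      show "set P3 \<inter> set P2 \<subseteq> {a, d}"
      proof
        fix v assume v: "v \<in> set P3 \<inter> set P2"
        have o1: "v \<in> set r3 \<or> v \<in> set de" using v sP3 by blast
        have o2: "v \<in> set al \<or> v \<in> set R" using v sP2 by blast
        show "v \<in> {a, d}"
        proof (cases "v \<in> set R")
          case True
          have "v \<in> set r1 \<union> set r2 \<union> set r3" using o1 igd(2) by blast
          then have "v = c \<or> v = d" using RX True by blast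
          moreover have "v \<noteq> c" using o1 cn igd(2) by blast
          ultimately show ?thesis by simp
        next
          case False
          then have vA: "v \<in> set al" using o2 by blast
          then have vr1: "v \<in> set r1" using iab(2) by blast
          show ?thesis
          proof (cases "v \<in> set r3")
            case True
            then have "v = a \<or> v = b" using vr1 F(12) by blast
            then show ?thesis using bnA vA by auto
          next
            case False
            then have "v \<in> set de" using o1 by blast
            then have "v \<in> set r2" using igd(2) by blast
            then have "v = a \<or> v = b" using vr1 F(11) by blast
            then show ?thesis using bnA vA anD \<open>v \<in> set de\<close> by auto
          qed
        qed
      qed
      show "{a, d} \<subseteq> set P3 \<inter> set P2" using a3 aA bD cR sP2 sP3 by simp
    qed
    then show ?thesis unfolding circ2_def using pP3 pP2 hP2 hP3 da lP2 lP3 by simp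
  qed
  have K13: "f ` pe ga \<union> f ` pe P3 = K"
  proof -
    have "pe ga \<union> pe P3 = pe r2 \<union> pe r3" using pegd peP3 by blast
    then have "f ` pe ga \<union> f ` pe P3 = f ` pe r2 \<union> f ` pe r3" by (metis image_Un)
    then show ?thesis using F(16) by simp
  qed
  have bad2: "\<not> f ` pe P2 \<subseteq> K"
  proof
    assume "f ` pe P2 \<subseteq> K"
    moreover have "f ` pe R \<subseteq> f ` pe P2" using peP2 by (intro image_mono) blast
    ultimately have "f ` pe R \<subseteq> K" by (rule subset_trans[rotated])
    then show False using bad by simp
  qed
  have "f ` pe ga \<inter> f ` pe P3 = {}" using theta_disj[OF G cs c13 c12 c23 K13 bad2] .
  moreover have "f ` pe r3 \<subseteq> f ` pe P3" using peP3 by (intro image_mono) blast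
  ultimately have "f ` pe ga \<inter> f ` pe r3 = {}" by (rule disj_mono)
  then show ?thesis unfolding ga_def .
qed

lemma coreB_rev:
  assumes G: "graph V E" and cs: "\<forall>C. is_circuit V E C \<longrightarrow> is_circuit V' E' (f ` C)"
    and T: "thetaK E f K a b r1 r2 r3"
    and R: "ear E (set r1 \<union> set r2 \<union> set r3) R" and bad: "\<not> f ` pe R \<subseteq> K"
    and ci: "hd R = r1 ! i" "0 < i" "Suc i < length r1"
    and dj: "last R = r2 ! j" "0 < j" "Suc j < length r2"
  shows "f ` pe (drop j r2) \<inter> f ` pe r3 = {}"
proof -
  have Tr: "thetaK E f K b a (rev r1) (rev r2) (rev r3)" using thetaK_rev[OF T] .
  have Rr: "ear E (set (rev r1) \<union> set (rev r2) \<union> set (rev r3)) R" using R by simp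
  define i' where "i' = length r1 - Suc i"
  define j' where "j' = length r2 - Suc j"
  have i'l: "i' < length r1" "rev r1 ! i' = r1 ! i" unfolding i'_def using ci by (auto simp: rev_nth)
  have j'l: "j' < length r2" "rev r2 ! j' = r2 ! j" unfolding j'_def using dj by (auto simp: rev_nth)
  have ci': "hd R = rev r1 ! i'" "0 < i'" "Suc i' < length (rev r1)" using ci i'l unfolding i'_def by auto
  have dj': "last R = rev r2 ! j'" "0 < j'" "Suc j' < length (rev r2)" using dj j'l unfolding j'_def by auto
  have "f ` pe (take (Suc j') (rev r2)) \<inter> f ` pe (rev r3) = {}"
    using coreB[OF G cs Tr Rr bad ci' dj'] .
  moreover have "take (Suc j') (rev r2) = rev (drop j r2)" unfolding j'_def using dj by (simp add: rev_drop Suc_diff_Suc)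
  ultimately show ?thesis by (simp add: pe_rev)
qed

lemma un_disj: "A \<inter> C = {} \<Longrightarrow> B \<inter> C = {} \<Longrightarrow> (A \<union> B) \<inter> C = {}"
  by blast

lemma caseB:
  assumes G: "graph V E" and cs: "\<forall>C. is_circuit V E C \<longrightarrow> is_circuit V' E' (f ` C)"
    and T: "thetaK E f K a b r1 r2 r3"
    and R: "ear E (set r1 \<union> set r2 \<union> set r3) R" and bad: "\<not> f ` pe R \<subseteq> K"
    and c: "hd R \<in> set r1" "hd R \<noteq> a" "hd R \<noteq> b"
    and d: "last R \<in> set r2" "last R \<noteq> a" "last R \<noteq> b"
  shows False
proof -
  note F = thetaK_facts[OF T]
  have r1ne: "r1 \<noteq> []" and r2ne: "r2 \<noteq> []" using F(1,2) path_ne by blast+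
  obtain i where i: "i < length r1" "r1 ! i = hd R" using c(1) by (meson in_set_conv_nth)
  obtain j where j: "j < length r2" "r2 ! j = last R" using d(1) by (meson in_set_conv_nth)
  have i0: "0 < i"
  proof (rule ccontr)
    assume "\<not> 0 < i" then have "i = 0" by simp
    then have "hd R = a" using i F(4) r1ne by (simp add: hd_conv_nth)
    then show False using c by simp
  qed
  have i1: "Suc i < length r1"
  proof (rule ccontr)
    assume "\<not> Suc i < length r1" then have "i = length r1 - 1" using i by simp
    then have "hd R = b" using i F(7) r1ne by (simp add: last_conv_nth)
    then show False using c by simp
  qed
  have j0: "0 < j"
  proof (rule ccontr)
    assume "\<not> 0 < j" then have "j = 0" by simp
    then have "last R = a" using j F(5) r2ne by (simp add: hd_conv_nth)
    then show False using d by simp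
  qed
  have j1: "Suc j < length r2"
  proof (rule ccontr)
    assume "\<not> Suc j < length r2" then have "j = length r2 - 1" using j by simp
    then have "last R = b" using j F(8) r2ne by (simp add: last_conv_nth)
    then show False using d by simp
  qed
  have ci: "hd R = r1 ! i" using i by simp
  have dj: "last R = r2 ! j" using j by simp
  have d1: "f ` pe (take (Suc j) r2) \<inter> f ` pe r3 = {}" using coreB[OF G cs T R bad ci i0 i1 dj j0 j1] .
  have d2: "f ` pe (drop j r2) \<inter> f ` pe r3 = {}" using coreB_rev[OF G cs T R bad ci i0 i1 dj j0 j1] .
  have T12: "thetaK E f K a b r2 r1 r3" using thetaK_swap12[OF T] .
  have Weq: "set r1 \<union> set r2 \<union> set r3 = set r2 \<union> set r1 \<union> set r3" by blast
  have R12: "ear E (set r2 \<union> set r1 \<union> set r3) (rev R)" using ear_rev[OF ear_W_eq[OF R Weq]] .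
  have Rne: "R \<noteq> []" using ear_ne[OF R] .
  have bad12: "\<not> f ` pe (rev R) \<subseteq> K" using bad by (simp add: pe_rev)
  have hR: "hd (rev R) = r2 ! j" "last (rev R) = r1 ! i" using Rne i j by (simp_all add: hd_rev last_rev)
  have d3: "f ` pe (take (Suc i) r1) \<inter> f ` pe r3 = {}" using coreB[OF G cs T12 R12 bad12 hR(1) j0 j1 hR(2) i0 i1] .
  have d4: "f ` pe (drop i r1) \<inter> f ` pe r3 = {}" using coreB_rev[OF G cs T12 R12 bad12 hR(1) j0 j1 hR(2) i0 i1] .
  have p1: "pe r1 = pe (take (Suc i) r1) \<union> pe (drop i r1)" using split2(9)[OF F(1) i(1)] by simp
  have p2: "pe r2 = pe (take (Suc j) r2) \<union> pe (drop j r2)" using split2(9)[OF F(2) j(1)] by simp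
  have "f ` pe r1 = f ` pe (take (Suc i) r1) \<union> f ` pe (drop i r1)" using p1 by (simp add: image_Un)
  then have e1: "f ` pe r1 \<inter> f ` pe r3 = {}" using un_disj[OF d3 d4] by simp
  have "f ` pe r2 = f ` pe (take (Suc j) r2) \<union> f ` pe (drop j r2)" using p2 by (simp add: image_Un)
  then have e2: "f ` pe r2 \<inter> f ` pe r3 = {}" using un_disj[OF d1 d2] by simp
  have "f ` pe r3 \<subseteq> K" using F(15) Un_upper2[of "f ` pe r3" "f ` pe r1"] by simp
  then have "f ` pe r3 \<subseteq> f ` pe r1 \<union> f ` pe r2" using F(14) by simp
  then have "f ` pe r3 = {}" using sub_disj e1 e2 by (metis Int_commute)
  then have "pe r3 = {}" by simp
  moreover have "length r3 \<ge> 2" using len_ge2[OF path_ne[OF F(3)]] F(6,9,10) by simp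
  ultimately show False using pe_ne by blast
qed

lemma phase2:
  assumes G: "graph V E" and cs: "\<forall>C. is_circuit V E C \<longrightarrow> is_circuit V' E' (f ` C)"
    and T: "thetaK E f K a b r1 r2 r3"
    and R: "ear E (set r1 \<union> set r2 \<union> set r3) R" and bad: "\<not> f ` pe R \<subseteq> K"
  shows False
proof -
  note F = thetaK_facts[OF T]
  let ?c = "hd R" and ?d = "last R"
  have cW: "?c \<in> set r1 \<union> set r2 \<union> set r3" "?d \<in> set r1 \<union> set r2 \<union> set r3"
    using ear_ends[OF R] by auto
  have T213: "thetaK E f K a b r2 r1 r3" using thetaK_swap12[OF T] .
  have T321: "thetaK E f K a b r3 r2 r1" using thetaK_swap13[OF T] .
  have T132: "thetaK E f K a b r1 r3 r2" using thetaK_swap23[OF T] .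
  have T312: "thetaK E f K a b r3 r1 r2" using thetaK_swap23[OF T321] .
  have T231: "thetaK E f K a b r2 r3 r1" using thetaK_swap23[OF T213] .
  have R213: "ear E (set r2 \<union> set r1 \<union> set r3) R" using ear_W_eq[OF R] by (simp add: Un_ac)
  have R321: "ear E (set r3 \<union> set r2 \<union> set r1) R" using ear_W_eq[OF R] by (simp add: Un_ac)
  have R132: "ear E (set r1 \<union> set r3 \<union> set r2) R" using ear_W_eq[OF R] by (simp add: Un_ac)
  have R312: "ear E (set r3 \<union> set r1 \<union> set r2) R" using ear_W_eq[OF R] by (simp add: Un_ac)
  have R231: "ear E (set r2 \<union> set r3 \<union> set r1) R" using ear_W_eq[OF R] by (simp add: Un_ac)
  have ab: "a \<in> set r1" "a \<in> set r2" "a \<in> set r3" "b \<in> set r1" "b \<in> set r2" "b \<in> set r3"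
    using F(11,12) by blast+
  show False
  proof (cases "?c \<in> set r1 \<and> ?d \<in> set r1")
    case True then show False using caseA[OF G cs T R bad] by blast
  next
    case n1: False
    show False
    proof (cases "?c \<in> set r2 \<and> ?d \<in> set r2")
      case True then show False using caseA[OF G cs T213 R213 bad] by blast
    next
      case n2: False
      show False
      proof (cases "?c \<in> set r3 \<and> ?d \<in> set r3")
        case True then show False using caseA[OF G cs T321 R321 bad] by blast
      next
        case n3: False
        have cab: "?c \<noteq> a" "?c \<noteq> b" using n1 n2 n3 cW ab by auto
        have dab: "?d \<noteq> a" "?d \<noteq> b" using n1 n2 n3 cW ab by auto
        show False
        proof (cases "?c \<in> set r1")
          case c1: True
          show False
          proof (cases "?d \<in> set r2")
            case True show False using caseB[OF G cs T R bad c1 cab True dab] .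
          next
            case False
            then have "?d \<in> set r3" using cW n1 c1 by blast
            then show False using caseB[OF G cs T132 R132 bad c1 cab _ dab] by blast
          qed
        next
          case nc1: False
          show False
          proof (cases "?c \<in> set r2")
            case c2: True
            show False
            proof (cases "?d \<in> set r1")
              case True show False using caseB[OF G cs T213 R213 bad c2 cab True dab] .
            next
              case False
              then have "?d \<in> set r3" using cW n2 c2 by blast
              then show False using caseB[OF G cs T231 R231 bad c2 cab _ dab] by blast
            qed
          next
            case nc2: False
            then have c3: "?c \<in> set r3" using cW nc1 by blast
            show False
            proof (cases "?d \<in> set r1")
              case True show False using caseB[OF G cs T312 R312 bad c3 cab True dab] .
            next
              case False
              then have "?d \<in> set r2" using cW n3 c3 by blast
              then show False using caseB[OF G cs T321 R321 bad c3 cab _ dab] by blast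
            qed
          qed
        qed
      qed
    qed
  qed
qed

theorem lemma1p1:
  fixes V :: "'a set" and E :: "'a set set" and V' :: "'b set" and E' :: "'b set set"
    and f :: "'a set \<Rightarrow> 'b set"
  assumes "graph V E" and "graph V' E'"
    and "two_connected V E"
    and "\<not> is_circuit V' E' E'"
    and "circuit_surjection V E V' E' f"
    and "e \<in> E'"
    and "is_circuit V E C"
    and "\<exists>x\<in>C. f x = e"
  shows "{x\<in>E. f x = e} \<subseteq> C"
proof
  fix y assume "y \<in> {x\<in>E. f x = e}"
  then have yE: "y \<in> E" "f y = e" by auto
  show "y \<in> C"
  proof (rule ccontr)
    assume yC: "y \<notin> C"
    note G = assms(1) and TC = assms(3)
    have cs: "\<forall>C. is_circuit V E C \<longrightarrow> is_circuit V' E' (f ` C)" and fE: "f ` E = E'"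
      using assms(5) unfolding circuit_surjection_def by auto
    have "\<exists>xs. distinct xs \<and> length xs \<ge> 3 \<and> set xs \<subseteq> V \<and> cycle_edges xs \<subseteq> E \<and> C = cycle_edges xs"
      using assms(7) unfolding is_circuit_def .
    then obtain xs where xs: "distinct xs" "length xs \<ge> 3" "set xs \<subseteq> V" "cycle_edges xs \<subseteq> E" "C = cycle_edges xs"
      by blast
    obtain x where x: "x \<in> C" "f x = e" using assms(8) by blast
    have x01: "xs ! 0 \<in> set xs" "xs ! 1 \<in> set xs" "xs ! 0 \<noteq> xs ! 1"
    proof -
      have l: "0 < length xs" "1 < length xs" using xs(2) by linarith+
      show "xs ! 0 \<in> set xs" using nth_mem[OF l(1)] .
      show "xs ! 1 \<in> set xs" using nth_mem[OF l(2)] .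
      show "xs ! 0 \<noteq> xs ! 1"
      proof
        assume "xs ! 0 = xs ! 1"
        then have "(0::nat) = 1" using nth_inj[OF xs(1) l] by blast
        then show False by simp
      qed
    qed
    obtain Q where Q: "ear E (set xs) Q" "y \<in> pe Q"
      using ear_lemma[OF G TC xs(3) x01 yE(1)] by blast
    define c where "c = hd Q"
    define d where "d = last Q"
    have cd: "c \<in> set xs" "d \<in> set xs" "c \<noteq> d" using ear_ends[OF Q(1)] unfolding c_def d_def by auto
    obtain p q where pq: "circ2 E p q" "hd p = c" "last p = d" "pe p \<union> pe q = C" "set p \<union> set q = set xs"
      using circuit_split[OF xs(1,2,4) cd] xs(5) by metis
    have hq: "hd q = c" "last q = d" using pq unfolding circ2_def by auto
    have pp: "path E p" "path E q" using pq(1) unfolding circ2_def by auto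
    have pQ: "path E Q" using ear_path[OF Q(1)] .
    have neQ: "Q \<noteq> []" using ear_ne[OF Q(1)] .
    have QX: "\<And>v. v \<in> set Q \<Longrightarrow> v \<in> set xs \<Longrightarrow> v = c \<or> v = d"
      using ear_inter[OF Q(1)] unfolding c_def d_def by blast
    have cQ: "c \<in> set Q" "d \<in> set Q" unfolding c_def d_def using neQ by auto
    have circQ: "\<And>r. path E r \<Longrightarrow> hd r = c \<Longrightarrow> last r = d \<Longrightarrow> set r \<subseteq> set xs \<Longrightarrow> pe r \<subseteq> C \<Longrightarrow> circ2 E r Q"
    proof -
      fix r assume r: "path E r" "hd r = c" "last r = d" "set r \<subseteq> set xs" "pe r \<subseteq> C"
      have rne: "r \<noteq> []" using r(1) path_ne by blast
      have "set r \<inter> set Q = {c, d}"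
      proof
        show "set r \<inter> set Q \<subseteq> {c, d}" using QX r(4) by blast
        show "{c, d} \<subseteq> set r \<inter> set Q" using cQ r(2,3) rne hd_in_set last_in_set by (metis Int_iff empty_subsetI insert_subset)
      qed
      moreover have "length r + length Q \<ge> 5"
      proof (rule ccontr)
        assume "\<not> ?thesis"
        moreover have "length r \<ge> 2" "length Q \<ge> 2" using len_ge2 rne neQ r(2,3) cd(3) c_def d_def by metis+
        ultimately have "length r = 2" "length Q = 2" by auto
        then have "r = Q" using len2_eq[of r Q] r(2,3) unfolding c_def d_def by simp
        then show False using Q(2) r(5) yC by blast
      qed
      ultimately show "circ2 E r Q" unfolding circ2_def using r pQ cd(3) c_def d_def by simp
    qed
    have cpQ: "circ2 E p Q" using circQ[OF pp(1) pq(2,3)] pq(4,5) by blast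
    have cqQ: "circ2 E q Q" using circQ[OF pp(2) hq] pq(4,5) by blast
    define K where "K = f ` C"
    have K0: "f ` pe p \<union> f ` pe q = K" unfolding K_def pq(4)[symmetric] by (rule image_Un[symmetric])
    have eQ: "e \<in> f ` pe Q" using Q(2) yE(2) by blast
    have all: "f ` pe p \<union> f ` pe Q = K \<and> f ` pe q \<union> f ` pe Q = K"
    proof (cases "x \<in> pe p")
      case True
      then have ep: "e \<in> f ` pe p" using x(2) by blast
      have "f ` pe p \<union> f ` pe q = f ` pe p \<union> f ` pe Q \<and> f ` pe Q \<union> f ` pe q = f ` pe p \<union> f ` pe Q"
        using theta_img[OF G cs cpQ pq(1) circ2_sym[OF cqQ] ep eQ] .
      then have h1: "f ` pe p \<union> f ` pe Q = K" and h2: "f ` pe Q \<union> f ` pe q = K" using K0 by auto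
      have "f ` pe q \<union> f ` pe Q = K" using h2 by (simp only: Un_commute)
      then show ?thesis using h1 by simp
    next
      case False
      then have "x \<in> pe q" using x(1) pq(4) by blast
      then have eq: "e \<in> f ` pe q" using x(2) by blast
      have "f ` pe q \<union> f ` pe p = f ` pe q \<union> f ` pe Q \<and> f ` pe Q \<union> f ` pe p = f ` pe q \<union> f ` pe Q"
        using theta_img[OF G cs cqQ circ2_sym[OF pq(1)] circ2_sym[OF cpQ] eq eQ] .
      moreover have "f ` pe q \<union> f ` pe p = K" using K0 by (simp only: Un_commute)
      ultimately have h1: "f ` pe q \<union> f ` pe Q = K" and h2: "f ` pe Q \<union> f ` pe p = K" by auto
      have "f ` pe p \<union> f ` pe Q = K" using h2 by (simp only: Un_commute)
      then show ?thesis using h1 by simp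
    qed
    have T: "thetaK E f K c d p q Q" unfolding thetaK_def using pq(1-3) cpQ cqQ K0 all by simp
    have Kc: "is_circuit V' E' K" unfolding K_def using cs assms(7) by blast
    have "K \<noteq> E'" using Kc assms(4) by blast
    moreover have "K \<subseteq> E'" unfolding K_def using fE xs(4,5) by blast
    ultimately obtain z' where "z' \<in> E'" "z' \<notin> K" by blast
    then obtain z where z: "z \<in> E" "f z \<notin> K" using fE by blast
    have WV: "set p \<union> set q \<union> set Q \<subseteq> V"
      using xs(3) pq(5) path_vertices[OF G pQ ear_len[OF Q(1)]] by blast
    have cdW: "c \<in> set p \<union> set q \<union> set Q" "d \<in> set p \<union> set q \<union> set Q" using cQ by auto
    obtain R where R: "ear E (set p \<union> set q \<union> set Q) R" "z \<in> pe R"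
      using ear_lemma[OF G TC WV cdW cd(3) z(1)] by blast
    have "\<not> f ` pe R \<subseteq> K" using R(2) z(2) by blast
    then show False using phase2[OF G cs T R(1)] by blast
  qed
qed

end
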